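(* Let $\sigma=\mathrm{ReLU}$, i.e. $\sigma(x)=\max(0,x)$, and consider the covariance sequence $\{\Sigma^{(L)}\}_{L\ge1}$ and the metrics $\mathrm{FSP}_L(\sigma_w^2)$, $\mathrm{GEV}_L(\sigma_w^2)$ defined in the context. Then: 1. If $\sigma_w^2=2$, then either $\lim_{L\to\infty}\mathrm{GEV}_L(\sigma_w^2)=0$ or $\lim_{L\to\infty}\mathrm{FSP}_L(\sigma_w^2)=0$. 2. If $0<\sigma_w^2<2$, then for every $L\ge1$, $\mathrm{FSP}_L(\sigma_w^2)\le \frac{2C}{d_0}\left(\frac{\sigma_w^2}{2}\right)^L$.
   Context: Let $\mathcal G=(\mathcal V,\mathcal E)$ be a finite undirected graph with $n$ nodes, adjacency matrix $A\in\{0,1\}^{n\times n}$, degree matrix $D=\mathrm{diag}(A\mathbf 1_n)$ with degrees $d_i$, $\tilde A=A+I$, $\tilde D=D+I$, normalized adjacency $\hat A=\tilde D^{-1/2}\tilde A\tilde D^{-1/2}$ and normalized Laplacian $\hat L=I-\hat A$. For $H\in\mathbb R^{n\times C}$ with rows $h_i$, the Dirichlet energy is $\mathrm{Dir}(H)=\mathrm{tr}(H^\top\hat LH)=\sum_{\{i,j\}\in\mathcal E}\|h_i/\sqrt{1+d_i}-h_j/\sqrt{1+d_j}\|^2$. Let $X\in\mathbb R^{n\times d_0}$ be a nonzero feature matrix, $C\ge1$ an integer (number of output channels), $\sigma:\mathbb R\to\mathbb R$ an activation function applied entrywise, and $\sigma_w^2>0$. For a positive semidefinite $\Sigma\in\mathbb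 R^{n\times n}$ set $G(\Sigma)=\mathbb E_{h\sim N(\mathbf 0_n,\Sigma)}[\sigma(h)\sigma(h)^\top]$. Define $\Sigma^{(1)}=\frac{\sigma_w^2}{d_0}\hat AXX^\top\hat A$ and $\Sigma^{(l+1)}=\sigma_w^2\hat AG(\Sigma^{(l)})\hat A$ for $l\ge1$ (the infinite-width NNGP covariances of a vanilla GCN $H^{(l)}=\hat A\sigma(H^{(l-1)})W^{(l)}$ with i.i.d. weights of variance $\sigma_w^2/\text{fan-in}$ and zero biases). With $H\in\mathbb R^{n\times C}$ having i.i.d. columns distributed as $N(\mathbf 0_n,\Sigma^{(L)})$, define the forward signal propagation metric $\mathrm{FSP}_L(\sigma_w^2)=\mathbb E[\|H\|_F^2/\|X\|_F^2]$ and the graph embedding variation metric $\mathrm{GEV}_L(\sigma_w^2)=\mathbb E[\mathrm{Dir}(H)/\|H\|_F^2]$. *)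

theory Defs
  imports "HOL-Probability.Probability"
begin

(* Graph on the finite node type 'n, given by a symmetric irreflexive edge relation E. *)

definition adj_mat :: "('n::finite \<Rightarrow> 'n \<Rightarrow> bool) \<Rightarrow> real^'n^'n" where
  "adj_mat E = (\<chi> i j. if E i j then 1 else 0)"

definition degree :: "('n::finite \<Rightarrow> 'n \<Rightarrow> bool) \<Rightarrow> 'n \<Rightarrow> real" where
  "degree E i = (\<Sum>j\<in>UNIV. adj_mat E $ i $ j)"

definition Dtil_inv_sqrt :: "('n::finite \<Rightarrow> 'n \<Rightarrow> bool) \<Rightarrow> real^'n^'n" where
  "Dtil_inv_sqrt E = (\<chi> i j. if i = j then 1 / sqrt (1 + degree E i) else 0)"

definition norm_adj :: "('n::finite \<Rightarrow> 'n \<Rightarrow> bool) \<Rightarrow> real^'n^'n" where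
  "norm_adj E = Dtil_inv_sqrt E ** (adj_mat E + mat 1) ** Dtil_inv_sqrt E"

definition norm_lap :: "('n::finite \<Rightarrow> 'n \<Rightarrow> bool) \<Rightarrow> real^'n^'n" where
  "norm_lap E = mat 1 - norm_adj E"

definition relu :: "real \<Rightarrow> real" where
  "relu x = max 0 x"

definition std_normal :: "real measure" where
  "std_normal = density lborel std_normal_density"

(* a square root factor B with B B^T = S (exists for PSD S) *)
definition cov_factor :: "real^'n^'n \<Rightarrow> real^'n^'n" where
  "cov_factor S = (SOME B. B ** transpose B = S)"

(* G(S) = E_{h ~ N(0,S)} [\<sigma>(h) \<sigma>(h)^T], with h = B z, z standard Gaussian on R^n, B B^T = S *)
definition gauss_G :: "(real \<Rightarrow> real) \<Rightarrow> real^'n::finite^'n \<Rightarrow> real^'n^'n" where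
  "gauss_G \<sigma> S = (\<chi> i j. \<integral>z. \<sigma> ((cov_factor S *v (\<chi> k. z k)) $ i) * \<sigma> ((cov_factor S *v (\<chi> k. z k)) $ j)
        \<partial>(PiM (UNIV :: 'n set) (\<lambda>_. std_normal)))"

(* NNGP covariances: nngp_cov ... L = \<Sigma>^(L) for L \<ge> 1 (index 0 unused, set to 0).
   s stands for \<sigma>_w^2, X is the n \<times> d_0 feature matrix with d_0 = CARD('d). *)
fun nngp_cov :: "(real \<Rightarrow> real) \<Rightarrow> ('n::finite \<Rightarrow> 'n \<Rightarrow> bool) \<Rightarrow> real^'d::finite^'n \<Rightarrow> real \<Rightarrow> nat \<Rightarrow> real^'n^'n" where
  "nngp_cov \<sigma> E X s 0 = 0"
| "nngp_cov \<sigma> E X s (Suc 0) =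
     (s / real CARD('d)) *\<^sub>R (norm_adj E ** X ** transpose X ** norm_adj E)"
| "nngp_cov \<sigma> E X s (Suc (Suc l)) =
     s *\<^sub>R (norm_adj E ** gauss_G \<sigma> (nngp_cov \<sigma> E X s (Suc l)) ** norm_adj E)"

(* Random embedding H \<in> R^{n \<times> C} with i.i.d. columns N(0,S):  H = B Z with Z an n \<times> C matrix of
   i.i.d. N(0,1) entries (columns indexed by {..<C}). *)
definition std_gauss_mat :: "nat \<Rightarrow> ('n::finite \<times> nat \<Rightarrow> real) measure" where
  "std_gauss_mat C = PiM (UNIV \<times> {..<C}) (\<lambda>_. std_normal)"

definition gauss_emb :: "real^'n::finite^'n \<Rightarrow> ('n \<times> nat \<Rightarrow> real) \<Rightarrow> 'n \<Rightarrow> nat \<Rightarrow> real" where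
  "gauss_emb S Z i c = (\<Sum>k\<in>UNIV. cov_factor S $ i $ k * Z (k, c))"

definition frob_sq_emb :: "nat \<Rightarrow> ('n::finite \<Rightarrow> nat \<Rightarrow> real) \<Rightarrow> real" where
  "frob_sq_emb C H = (\<Sum>i\<in>UNIV. \<Sum>c<C. (H i c)\<^sup>2)"

definition frob_sq :: "real^'d::finite^'n::finite \<Rightarrow> real" where
  "frob_sq X = (\<Sum>i\<in>UNIV. \<Sum>j\<in>UNIV. (X $ i $ j)\<^sup>2)"

definition dirichlet :: "('n::finite \<Rightarrow> 'n \<Rightarrow> bool) \<Rightarrow> nat \<Rightarrow> ('n \<Rightarrow> nat \<Rightarrow> real) \<Rightarrow> real" where
  "dirichlet E C H = (\<Sum>c<C. \<Sum>i\<in>UNIV. \<Sum>j\<in>UNIV. H i c * norm_lap E $ i $ j * H j c)"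

definition FSP :: "(real \<Rightarrow> real) \<Rightarrow> ('n::finite \<Rightarrow> 'n \<Rightarrow> bool) \<Rightarrow> real^'d::finite^'n \<Rightarrow> nat \<Rightarrow> nat \<Rightarrow> real \<Rightarrow> real" where
  "FSP \<sigma> E X C L s = (\<integral>Z. frob_sq_emb C (gauss_emb (nngp_cov \<sigma> E X s L) Z) / frob_sq X \<partial>std_gauss_mat C)"

definition GEV :: "(real \<Rightarrow> real) \<Rightarrow> ('n::finite \<Rightarrow> 'n \<Rightarrow> bool) \<Rightarrow> real^'d::finite^'n \<Rightarrow> nat \<Rightarrow> nat \<Rightarrow> real \<Rightarrow> real" where
  "GEV \<sigma> E X C L s = (\<integral>Z. dirichlet E C (gauss_emb (nngp_cov \<sigma> E X s L) Z)
        / frob_sq_emb C (gauss_emb (nngp_cov \<sigma> E X s L) Z) \<partial>std_gauss_mat C)"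

end

theory Submission
  imports Defs
begin


lemma sets_SN[simp, measurable_cong]: "sets std_normal = sets borel"
  by (simp add: std_normal_def)
lemma space_SN[simp]: "space std_normal = UNIV"
  by (simp add: std_normal_def)
lemma prob_SN: "prob_space std_normal"
  unfolding std_normal_def by (rule prob_space_normal_density) simp
interpretation SN: prob_space std_normal by (rule prob_SN)

lemma SN_probUNIV[simp]: "SN.prob UNIV = 1"
  using SN.prob_space by simp

lemma pps_SN: "product_prob_space (\<lambda>_::'i. std_normal)"
  by (rule product_prob_spaceI) (rule prob_SN)
lemma psf_SN: "product_sigma_finite (\<lambda>_::'i. std_normal)"
  using pps_SN unfolding product_prob_space_def by blast

lemma SN_moment:
  "integrable std_normal (\<lambda>x. x^k)"
  "integral\<^sup>L std_normal (\<lambda>x. x^k) = integral\<^sup>L lborel (\<lambda>x. std_normal_density x * x^k)"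
  unfolding std_normal_def
   apply (subst integrable_density; simp add: integrable_std_normal_moment)
  apply (subst integral_density; simp)
  done

lemma SN_int1: "integral\<^sup>L std_normal (\<lambda>x. x) = 0"
  using SN_moment(2)[of 1] integral_std_normal_moment_odd[of 0] by simp
lemma SN_int2: "integral\<^sup>L std_normal (\<lambda>x. x*x) = 1"
proof -
  have "integral\<^sup>L std_normal (\<lambda>x. x^2) = 1"
    using SN_moment(2)[of 2] integral_std_normal_moment_even[of 1] by simp
  then show ?thesis by (simp add: power2_eq_square)
qed
lemma SN_intg1: "integrable std_normal (\<lambda>x. x)"
  using SN_moment(1)[of 1] by simp
lemma SN_intg0: "integrable std_normal (\<lambda>x. c::real)"
  by simp
lemma SN_int0: "integral\<^sup>L std_normal (\<lambda>x. c::real) = c"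
  by simp
lemma SN_intg2: "integrable std_normal (\<lambda>x. x*x)"
  using SN_moment(1)[of 2] by (simp add: power2_eq_square)

abbreviation PSN :: "'i set \<Rightarrow> ('i \<Rightarrow> real) measure" where
  "PSN I \<equiv> PiM I (\<lambda>_. std_normal)"

lemma prob_PSN: "prob_space (PSN I)"
  by (rule prob_space_PiM) (rule prob_SN)

lemma PSN_pair:
  assumes I: "finite I" and a: "a \<in> I" and b: "b \<in> I"
  shows "integrable (PSN I) (\<lambda>z. z a * z b)"
    "integral\<^sup>L (PSN I) (\<lambda>z. z a * z b) = (if a = b then 1 else 0)"
proof -
  define f where "f i x = (if i = a then x else 1) * (if i = b then x else (1::real))" for i x
  have eq: "z a * z b = (\<Prod>i\<in>I. f i (z i))" for z
    using I a b by (simp add: f_def prod.distrib prod.delta)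
  have intf: "integrable std_normal (f i)" for i
    unfolding f_def by (cases "i = a"; cases "i = b"; simp add: SN_intg1 SN_intg2 SN_intg0)
  show "integrable (PSN I) (\<lambda>z. z a * z b)"
    unfolding eq by (rule product_sigma_finite.product_integrable_prod[OF psf_SN I intf])
  have "integral\<^sup>L (PSN I) (\<lambda>z. z a * z b) = (\<Prod>i\<in>I. integral\<^sup>L std_normal (f i))"
    unfolding eq by (rule product_sigma_finite.product_integral_prod[OF psf_SN I intf])
  also have "\<dots> = (if a = b then 1 else 0)"
  proof (cases "a = b")
    case True
    have "(\<Prod>i\<in>I. integral\<^sup>L std_normal (f i)) = (\<Prod>i\<in>I. if i = a then 1 else 1)"
    proof (intro prod.cong refl)
      fix x assume "x \<in> I"
      show "integral\<^sup>L std_normal (f x) = (if x = a then 1 else 1)"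
        unfolding f_def using True by (cases "x = a") (simp_all add: SN_int2)
    qed
    then show ?thesis using True by simp
  next
    case False
    have "f a = (\<lambda>x. x)" using False by (auto simp: f_def)
    then have "integral\<^sup>L std_normal (f a) = 0" by (simp add: SN_int1)
    then show ?thesis using False I a by (auto intro!: prod_zero)
  qed
  finally show "integral\<^sup>L (PSN I) (\<lambda>z. z a * z b) = (if a = b then 1 else 0)" .
qed

lemma PSN_lin:
  assumes I: "finite I" and K: "finite K" and g: "inj_on g K" "g ` K \<subseteq> I"
  shows "integrable (PSN I) (\<lambda>z. (\<Sum>k\<in>K. u k * z (g k)) * (\<Sum>k\<in>K. v k * z (g k)))"
    "integral\<^sup>L (PSN I) (\<lambda>z. (\<Sum>k\<in>K. u k * z (g k)) * (\<Sum>k\<in>K. v k * z (g k))) = (\<Sum>k\<in>K. u k * v k)"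
proof -
  have eq: "(\<Sum>k\<in>K. u k * z (g k)) * (\<Sum>k\<in>K. v k * z (g k)) =
     (\<Sum>k\<in>K. \<Sum>k'\<in>K. (u k * v k') * (z (g k) * z (g k')))" for z
    by (simp add: sum_product algebra_simps)
  have int: "integrable (PSN I) (\<lambda>z. z (g k) * z (g k'))" if "k \<in> K" "k' \<in> K" for k k'
    using PSN_pair(1)[OF I] g that by auto
  show "integrable (PSN I) (\<lambda>z. (\<Sum>k\<in>K. u k * z (g k)) * (\<Sum>k\<in>K. v k * z (g k)))"
    unfolding eq by (auto intro!: integrable_sum integrable_mult_right int)
  have "integral\<^sup>L (PSN I) (\<lambda>z. (\<Sum>k\<in>K. u k * z (g k)) * (\<Sum>k\<in>K. v k * z (g k)))
      = (\<Sum>k\<in>K. \<Sum>k'\<in>K. (u k * v k') * integral\<^sup>L (PSN I) (\<lambda>z. z (g k) * z (g k')))"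
    unfolding eq using int by (simp add: integral_sum integrable_sum)
  also have "\<dots> = (\<Sum>k\<in>K. \<Sum>k'\<in>K. if k' = k then u k * v k' else 0)"
  proof (intro sum.cong refl)
    fix k k' assume "k \<in> K" "k' \<in> K"
    moreover have "(g k = g k') = (k' = k)" using g(1) \<open>k \<in> K\<close> \<open>k' \<in> K\<close> by (auto dest: inj_onD)
    moreover have "g k \<in> I" "g k' \<in> I" using g \<open>k \<in> K\<close> \<open>k' \<in> K\<close> by auto
    ultimately show "u k * v k' * integral\<^sup>L (PSN I) (\<lambda>z. z (g k) * z (g k')) = (if k' = k then u k * v k' else 0)"
      using PSN_pair(2)[OF I, of "g k" "g k'"] by simp
  qed
  also have "\<dots> = (\<Sum>k\<in>K. u k * v k)"
    using K by simp
  finally show "integral\<^sup>L (PSN I) (\<lambda>z. (\<Sum>k\<in>K. u k * z (g k)) * (\<Sum>k\<in>K. v k * z (g k))) = (\<Sum>k\<in>K. u k * v k)" .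
qed

lemma PSN_lin_id:
  assumes I: "finite I"
  shows "integrable (PSN I) (\<lambda>z. (\<Sum>k\<in>I. u k * z k) * (\<Sum>k\<in>I. v k * z k))"
    "integral\<^sup>L (PSN I) (\<lambda>z. (\<Sum>k\<in>I. u k * z k) * (\<Sum>k\<in>I. v k * z k)) = (\<Sum>k\<in>I. u k * v k)"
  using PSN_lin[OF I I, of id u v] by auto

lemma relu_measurable[measurable]: "relu \<in> borel_measurable borel"
  unfolding relu_def[abs_def] by measurable

lemma relu_sq: "(relu x)^2 + (relu (-x))^2 = x^2"
  by (simp add: relu_def max_def power2_eq_square)

lemma relu_sq_le: "relu x * relu x \<le> x * x" "relu (-x) * relu (-x) \<le> x * x"
  by (auto simp: relu_def max_def)

lemma relu_abs: "\<bar>relu x\<bar> \<le> \<bar>x\<bar>"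
  by (simp add: relu_def max_def)

lemma SN_reflect: "distr std_normal std_normal uminus = std_normal"
proof (rule measure_eqI)
  show "sets (distr std_normal std_normal uminus) = sets std_normal" by simp
  fix A assume A: "A \<in> sets (distr std_normal std_normal uminus)"
  then have A': "A \<in> sets borel" by simp
  have um: "uminus -` A \<in> sets borel"
    using measurable_sets[OF borel_measurable_uminus[OF measurable_ident_sets[OF refl]] A'] by simp
  have "emeasure (distr std_normal std_normal uminus) A = emeasure std_normal (uminus -` A)"
    using A' um by (subst emeasure_distr) auto
  also have "\<dots> = (\<integral>\<^sup>+ x. ennreal (std_normal_density x) * indicator (uminus -` A) x \<partial>lborel)"
    unfolding std_normal_def using A' um by (subst emeasure_density) auto
  also have "\<dots> = (\<integral>\<^sup>+ x. (\<lambda>y. ennreal (std_normal_density y) * indicator A y) (- x) \<partial>lborel)"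
    by (intro nn_integral_cong) (auto simp: normal_density_def split: split_indicator)
  also have "\<dots> = (\<integral>\<^sup>+ y. ennreal (std_normal_density y) * indicator A y \<partial>distr lborel borel uminus)"
    using A' by (subst nn_integral_distr) auto
  also have "\<dots> = emeasure std_normal A"
    unfolding lborel_distr_uminus std_normal_def using A' by (subst emeasure_density) auto
  finally show "emeasure (distr std_normal std_normal uminus) A = emeasure std_normal A" .
qed

lemma PSN_reflect:
  assumes I: "finite I"
  shows "distr (PSN I) (PSN I) (compose I uminus) = PSN I"
  using distr_PiM_finite_prob_space'[OF I, of "\<lambda>_. std_normal" "\<lambda>_. std_normal" uminus]
  by (simp add: prob_SN SN_reflect)

lemma PSN_relu_sq:
  assumes I: "finite I"
  shows "integrable (PSN I) (\<lambda>z. (relu (\<Sum>i\<in>I. w i * z i))^2)"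
    "integral\<^sup>L (PSN I) (\<lambda>z. (relu (\<Sum>i\<in>I. w i * z i))^2) = (\<Sum>i\<in>I. (w i)^2) / 2"
proof -
  define h where "h z = (\<Sum>i\<in>I. w i * z i)" for z :: "'a \<Rightarrow> real"
  have hm[measurable]: "h \<in> borel_measurable (PSN I)"
    unfolding h_def by measurable
  have hh: "integrable (PSN I) (\<lambda>z. h z * h z)" "integral\<^sup>L (PSN I) (\<lambda>z. h z * h z) = (\<Sum>i\<in>I. (w i)^2)"
    using PSN_lin_id[OF I, of w w] by (simp_all add: h_def power2_eq_square)
  have ir: "integrable (PSN I) (\<lambda>z. (relu (h z))^2)"
    by (rule Bochner_Integration.integrable_bound[OF hh(1)])
       (auto simp: power2_eq_square abs_mult relu_sq_le)
  then show "integrable (PSN I) (\<lambda>z. (relu (\<Sum>i\<in>I. w i * z i))^2)" by (simp add: h_def)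
  have hneg: "h (compose I uminus z) = - h z" for z
    unfolding h_def compose_def by (simp add: sum_negf)
  have "integral\<^sup>L (PSN I) (\<lambda>z. (relu (h z))^2) = integral\<^sup>L (distr (PSN I) (PSN I) (compose I uminus)) (\<lambda>z. (relu (h z))^2)"
    by (simp add: PSN_reflect[OF I])
  also have "\<dots> = integral\<^sup>L (PSN I) (\<lambda>z. (relu (- h z))^2)"
  proof (subst integral_distr)
    show "compose I uminus \<in> PSN I \<rightarrow>\<^sub>M PSN I"
      unfolding compose_def
    proof (rule measurable_restrict)
      fix i assume i: "i \<in> I"
      show "(\<lambda>x. - x i) \<in> PSN I \<rightarrow>\<^sub>M std_normal"
        using i by measurable
    qed
  qed (auto simp: hneg)
  finally have eq: "integral\<^sup>L (PSN I) (\<lambda>z. (relu (h z))^2) = integral\<^sup>L (PSN I) (\<lambda>z. (relu (- h z))^2)" .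
  have ir2: "integrable (PSN I) (\<lambda>z. (relu (- h z))^2)"
    by (rule Bochner_Integration.integrable_bound[OF hh(1)])
       (auto simp: power2_eq_square abs_mult relu_sq_le)
  have "integral\<^sup>L (PSN I) (\<lambda>z. h z * h z) = integral\<^sup>L (PSN I) (\<lambda>z. (relu (h z))^2 + (relu (- h z))^2)"
  proof -
    have "(\<lambda>z. h z * h z) = (\<lambda>z. (relu (h z))^2 + (relu (- h z))^2)"
      by (rule ext) (simp add: relu_def max_def power2_eq_square)
    then show ?thesis by simp
  qed
  also have "\<dots> = 2 * integral\<^sup>L (PSN I) (\<lambda>z. (relu (h z))^2)"
    using ir ir2 eq by simp
  finally show "integral\<^sup>L (PSN I) (\<lambda>z. (relu (\<Sum>i\<in>I. w i * z i))^2) = (\<Sum>i\<in>I. (w i)^2) / 2"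
    using hh(2) by (simp add: h_def)
qed


lemma std_normal_density_le1: "std_normal_density x \<le> 1"
proof -
  have "sqrt (2*pi) \<ge> 1" using pi_gt3 by simp
  then have "1 / sqrt (2 * pi) \<le> 1" by simp
  moreover have "exp (- x\<^sup>2 / 2) \<le> 1" by simp
  ultimately show ?thesis unfolding std_normal_density_def
    by (metis exp_gt_zero less_eq_real_def mult_le_one zero_le_divide_1_iff real_sqrt_ge_0_iff
        mult_nonneg_nonneg pi_ge_zero zero_le_numeral)
qed

lemma SN_interval:
  assumes b: "b \<noteq> 0" and e: "0 < e"
  shows "emeasure std_normal {y. \<bar>b * y + c\<bar> < e} \<le> ennreal (2 * e / \<bar>b\<bar>)"
proof -
  define m where "m = - c / b"
  define S where "S = {y::real. \<bar>b * y + c\<bar> < e}"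
  have Sm[measurable]: "S \<in> sets borel" unfolding S_def by measurable
  have sub: "S \<subseteq> {m - e/\<bar>b\<bar> .. m + e/\<bar>b\<bar>}"
  proof
    fix y assume "y \<in> S"
    then have "\<bar>b * y + c\<bar> < e" by (simp add: S_def)
    moreover have "b * y + c = b * (y - m)" using b by (simp add: m_def field_simps)
    ultimately have "\<bar>b\<bar> * \<bar>y - m\<bar> < e" by (simp add: abs_mult)
    then have "\<bar>y - m\<bar> < e / \<bar>b\<bar>" using b by (simp add: field_simps mult.commute)
    then show "y \<in> {m - e/\<bar>b\<bar> .. m + e/\<bar>b\<bar>}" by auto
  qed
  have "emeasure std_normal S = (\<integral>\<^sup>+ y. ennreal (std_normal_density y) * indicator S y \<partial>lborel)"
    unfolding std_normal_def by (subst emeasure_density) auto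
  also have "\<dots> \<le> (\<integral>\<^sup>+ y. indicator {m - e/\<bar>b\<bar> .. m + e/\<bar>b\<bar>} y \<partial>lborel)"
    using sub std_normal_density_le1
    by (intro nn_integral_mono) (auto split: split_indicator)
  also have "\<dots> = ennreal (2 * e / \<bar>b\<bar>)"
    using e b by simp
  finally show ?thesis unfolding S_def .
qed

lemma PSN_smallball:
  assumes I: "finite I" and a: "a \<in> I" and wa: "w a \<noteq> 0" and e: "0 < e"
  shows "measure (PSN I) {z \<in> space (PSN I). \<bar>\<Sum>i\<in>I. w i * z i\<bar> < e} \<le> 2 * e / \<bar>w a\<bar>"
proof -
  interpret P: prob_space "PSN I" by (rule prob_PSN)
  define J where "J = I - {a}"
  have IJ: "I = insert a J" "a \<notin> J" "finite J" using a I by (auto simp: J_def)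
  define A where "A = {z \<in> space (PSN I). \<bar>\<Sum>i\<in>I. w i * z i\<bar> < e}"
  have Am[measurable]: "A \<in> sets (PSN I)"
    unfolding A_def using I by measurable
  interpret J: prob_space "PSN J" by (rule prob_PSN)
  have "emeasure (PSN I) A = (\<integral>\<^sup>+ z. indicator A z \<partial>PSN (insert a J))"
    using Am IJ by simp
  also have "\<dots> = (\<integral>\<^sup>+ x. (\<integral>\<^sup>+ y. indicator A (x(a := y)) \<partial>std_normal) \<partial>PSN J)"
    using IJ Am by (subst product_sigma_finite.product_nn_integral_insert[OF psf_SN]) auto
  also have "\<dots> \<le> (\<integral>\<^sup>+ x. ennreal (2 * e / \<bar>w a\<bar>) \<partial>PSN J)"
  proof (rule nn_integral_mono)
    fix x assume x: "x \<in> space (PSN J)"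
    define c where "c = (\<Sum>i\<in>J. w i * x i)"
    have "(\<lambda>y. indicator A (x(a := y)) :: ennreal) = indicator {y. \<bar>w a * y + c\<bar> < e}"
    proof
      fix y
      have sp: "x(a := y) \<in> space (PSN I)"
        using x IJ by (auto simp: space_PiM intro!: PiE_fun_upd)
      have "(\<Sum>i\<in>I. w i * (x(a := y)) i) = w a * y + c"
        unfolding c_def IJ(1) using IJ by (simp add: sum.insert) (intro sum.cong, auto)
      then show "indicator A (x(a := y)) = (indicator {y. \<bar>w a * y + c\<bar> < e} y :: ennreal)"
        using sp by (simp add: A_def split: split_indicator)
    qed
    moreover have "{y. \<bar>w a * y + c\<bar> < e} \<in> sets std_normal" by simp
    ultimately show "(\<integral>\<^sup>+ y. indicator A (x(a := y)) \<partial>std_normal) \<le> ennreal (2 * e / \<bar>w a\<bar>)"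
      using SN_interval[OF wa e, of c] by simp
  qed
  also have "\<dots> = ennreal (2 * e / \<bar>w a\<bar>)"
    using J.emeasure_space_1 by simp
  finally have "emeasure (PSN I) A \<le> ennreal (2 * e / \<bar>w a\<bar>)" .
  then show ?thesis
    unfolding A_def[symmetric] using e
    by (simp add: P.emeasure_eq_measure ennreal_le_iff)
qed


definition tr :: "real^'n^'n \<Rightarrow> real" where
  "tr M = (\<Sum>i\<in>UNIV. M$i$i)"

definition qfs :: "real^'n^'n \<Rightarrow> ('n \<Rightarrow> real) \<Rightarrow> real" where
  "qfs M x = (\<Sum>i\<in>UNIV. \<Sum>j\<in>UNIV. x i * M$i$j * x j)"

definition psd :: "real^'n^'n \<Rightarrow> bool" where
  "psd M \<longleftrightarrow> (\<forall>i j. M$i$j = M$j$i) \<and> (\<forall>x. 0 \<le> qfs M x)"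

lemma sum_if_out: "(\<Sum>j\<in>A. if P then f j else 0) = (if P then (\<Sum>j\<in>A. f j) else 0)"
  by auto

lemma sum_delta_mult: "(\<Sum>i\<in>(UNIV::'a::finite set). (if i = j then 1 else 0) * f i) = (f j::real)"
proof -
  have "(\<Sum>i\<in>(UNIV::'a set). (if i = j then 1 else 0) * f i) = (\<Sum>i\<in>UNIV. if i = j then f i else 0)"
    by (intro sum.cong) auto
  then show ?thesis by simp
qed

lemma quad_disc:
  fixes qq p ss :: real
  assumes s0: "0 \<le> ss" and H: "\<And>t. 0 \<le> qq + 2*t*p + t^2 * ss"
  shows "p^2 \<le> ss * qq"
proof (cases "ss = 0")
  case True
  show ?thesis
  proof (rule ccontr)
    assume "\<not> ?thesis"
    then have p: "p \<noteq> 0" using True by simp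
    have "0 \<le> qq + 2*(-(\<bar>qq\<bar>+1)/(2*p))*p + (-(\<bar>qq\<bar>+1)/(2*p))^2 * ss" by (rule H)
    also have "\<dots> = qq - \<bar>qq\<bar> - 1" using p True by (simp add: field_simps)
    finally show False by simp
  qed
next
  case False
  then have sp: "0 < ss" using s0 by simp
  have "0 \<le> qq + 2*(-p/ss)*p + (-p/ss)^2 * ss" by (rule H)
  also have "\<dots> = qq - p^2/ss" using sp by (simp add: field_simps power2_eq_square)
  finally show ?thesis using sp by (simp add: field_simps)
qed

lemma qfs_shift:
  fixes S :: "real^'n^'n"
  assumes sym: "\<And>i j. S$i$j = S$j$i"
  shows "qfs S (\<lambda>i. x i + t * (if i = a then 1 else 0)) =
     qfs S x + 2 * t * (\<Sum>i\<in>UNIV. x i * S$i$a) + t^2 * S$a$a"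
proof -
  have e1: "(\<Sum>j\<in>UNIV. S$a$j * x j) = (\<Sum>i\<in>UNIV. x i * S$i$a)"
    by (intro sum.cong refl) (simp add: sym mult.commute)
  have "qfs S (\<lambda>i. x i + t * (if i = a then 1 else 0)) =
     (\<Sum>i\<in>UNIV. \<Sum>j\<in>UNIV. x i * S$i$j * x j + t * (if i = a then S$a$j * x j else 0)
        + t * (if j = a then x i * S$i$a else 0) + t^2 * (if i = a then if j = a then S$a$a else 0 else 0))"
    unfolding qfs_def by (intro sum.cong refl) (auto simp: algebra_simps power2_eq_square)
  also have "\<dots> = qfs S x + t * (\<Sum>j\<in>UNIV. S$a$j * x j) + t * (\<Sum>i\<in>UNIV. x i * S$i$a) + t^2 * S$a$a"
    unfolding qfs_def by (simp add: sum.distrib sum_distrib_left[symmetric] sum_if_out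
        sum.swap[of "\<lambda>i j. t * (if j = a then x i * S$i$a else 0)"])
  finally show ?thesis using e1 by simp
qed

lemma psd_schur:
  fixes S :: "real^'n^'n"
  assumes "psd S"
  shows "(\<Sum>i\<in>UNIV. x i * S$i$a)^2 \<le> S$a$a * qfs S x" "0 \<le> S$a$a"
proof -
  have sym: "\<And>i j. S$i$j = S$j$i" and nn: "\<And>x. 0 \<le> qfs S x" using assms by (auto simp: psd_def)
  have "0 \<le> qfs S (\<lambda>i. 0 + 1 * (if i = a then 1 else 0))" by (rule nn)
  then show d: "0 \<le> S$a$a" using qfs_shift[OF sym, of "\<lambda>_. 0" 1 a] by (simp add: qfs_def)
  show "(\<Sum>i\<in>UNIV. x i * S$i$a)^2 \<le> S$a$a * qfs S x"
    by (rule quad_disc[OF d]) (use nn qfs_shift[OF sym, of x] in metis)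
qed

lemma psd_zero_diag:
  fixes S :: "real^'n^'n"
  assumes "psd S" "S$a$a = 0"
  shows "S$j$a = 0"
proof -
  have "(\<Sum>i\<in>UNIV. (if i = j then 1 else 0) * S$i$a)^2 \<le> S$a$a * qfs S (\<lambda>i. if i = j then 1 else 0)"
    by (rule psd_schur(1)[OF assms(1)])
  then show ?thesis using assms(2) by (simp only: sum_delta_mult) simp
qed

lemma mm_entry: "(A ** B)$i$j = (\<Sum>k\<in>UNIV. A$i$k * B$k$j)"
  by (simp add: matrix_matrix_mult_def)
lemma tr_entry[simp]: "transpose A $i$j = A$j$i"
  by (simp add: transpose_def)
lemma gram_entry: "(B ** transpose B)$i$j = (\<Sum>k\<in>UNIV. B$i$k * B$j$k)"
  by (simp add: mm_entry)

lemma qfs_sq: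
  fixes x v :: "'n::finite \<Rightarrow> real"
  shows "(\<Sum>i\<in>UNIV. x i * v i)^2 = (\<Sum>i\<in>UNIV. \<Sum>j\<in>UNIV. x i * (v i * v j) * x j)"
proof -
  have "(\<Sum>i\<in>UNIV. x i * v i)^2 = (\<Sum>i\<in>UNIV. x i * v i) * (\<Sum>j\<in>UNIV. x j * v j)"
    by (simp add: power2_eq_square)
  also have "\<dots> = (\<Sum>i\<in>UNIV. \<Sum>j\<in>UNIV. (x i * v i) * (x j * v j))" by (rule sum_product)
  also have "\<dots> = (\<Sum>i\<in>UNIV. \<Sum>j\<in>UNIV. x i * (v i * v j) * x j)" by (simp add: algebra_simps)
  finally show ?thesis .
qed

lemma factor_aux:
  fixes J :: "'n::finite set"
  assumes "finite J"
  shows "\<forall>S::real^'n^'n. psd S \<and> (\<forall>i j. S$i$j \<noteq> 0 \<longrightarrow> i \<in> J \<and> j \<in> J) \<longrightarrow>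
     (\<exists>B::real^'n^'n. B ** transpose B = S \<and> (\<forall>i k. B$i$k \<noteq> 0 \<longrightarrow> k \<in> J))"
  using assms
proof induct
  case empty
  show ?case
  proof (intro allI impI)
    fix S :: "real^'n^'n" assume "psd S \<and> (\<forall>i j. S$i$j \<noteq> 0 \<longrightarrow> i \<in> {} \<and> j \<in> {})"
    then have "S = 0" by (auto simp: vec_eq_iff)
    then show "\<exists>B::real^'n^'n. B ** transpose B = S \<and> (\<forall>i k. B$i$k \<noteq> 0 \<longrightarrow> k \<in> {})"
      by (intro exI[of _ 0]) (auto simp: vec_eq_iff gram_entry)
  qed
next
  case (insert a J)
  show ?case
  proof (intro allI impI)
    fix S :: "real^'n^'n" assume H: "psd S \<and> (\<forall>i j. S$i$j \<noteq> 0 \<longrightarrow> i \<in> insert a J \<and> j \<in> insert a J)"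
    then have ps: "psd S" and supp: "\<And>i j. S$i$j \<noteq> 0 \<Longrightarrow> i \<in> insert a J \<and> j \<in> insert a J" by auto
    have sym: "\<And>i j. S$i$j = S$j$i" using ps by (auto simp: psd_def)
    show "\<exists>B::real^'n^'n. B ** transpose B = S \<and> (\<forall>i k. B$i$k \<noteq> 0 \<longrightarrow> k \<in> insert a J)"
    proof (cases "S$a$a = 0")
      case True
      have z: "S$j$a = 0" "S$a$j = 0" for j using psd_zero_diag[OF ps True, of j] sym by auto
      have "\<forall>i j. S$i$j \<noteq> 0 \<longrightarrow> i \<in> J \<and> j \<in> J"
        using supp z by (metis insert_iff)
      then obtain B :: "real^'n^'n" where "B ** transpose B = S" "\<forall>i k. B$i$k \<noteq> 0 \<longrightarrow> k \<in> J"
        using insert.hyps(3) ps by blast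
      then show ?thesis by blast
    next
      case False
      have dpos: "0 < S$a$a" using psd_schur(2)[OF ps, of a] False by simp
      define r where "r = sqrt (S$a$a)"
      have rpos: "0 < r" and r2: "r * r = S$a$a" using dpos by (auto simp: r_def)
      define v where "v i = S$i$a / r" for i
      define S' :: "real^'n^'n" where "S' = (\<chi> i j. S$i$j - v i * v j)"
      have S'e: "S'$i$j = S$i$j - v i * v j" for i j by (simp add: S'_def)
      have qS': "qfs S' x = qfs S x - (\<Sum>i\<in>UNIV. x i * v i)^2" for x
        unfolding qfs_sq qfs_def S'e by (simp add: sum_subtractf[symmetric] algebra_simps)
      have vsq: "(\<Sum>i\<in>UNIV. x i * v i)^2 = (\<Sum>i\<in>UNIV. x i * S$i$a)^2 / S$a$a" for x
      proof -
        have "(\<Sum>i\<in>UNIV. x i * v i) = (\<Sum>i\<in>UNIV. x i * S$i$a) / r"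
          by (simp add: v_def sum_divide_distrib)
        then show ?thesis using r2 by (simp add: power_divide power2_eq_square)
      qed
      have psd': "psd S'"
        unfolding psd_def
      proof (intro conjI allI)
        fix i j show "S'$i$j = S'$j$i" by (simp add: S'e sym mult.commute)
      next
        fix x
        have "(\<Sum>i\<in>UNIV. x i * S$i$a)^2 \<le> S$a$a * qfs S x" by (rule psd_schur(1)[OF ps])
        then have "(\<Sum>i\<in>UNIV. x i * v i)^2 \<le> qfs S x"
          unfolding vsq using dpos by (simp add: field_simps)
        then show "0 \<le> qfs S' x" unfolding qS' by simp
      qed
      have va: "v a * v j = S$j$a" for j
      proof -
        have "v a * v j = (S$a$a * S$j$a) / (r * r)" by (simp add: v_def)
        then show ?thesis using r2 dpos by simp
      qed
      have supp': "S'$i$j \<noteq> 0 \<longrightarrow> i \<in> J \<and> j \<in> J" for i j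
      proof
        assume nz: "S'$i$j \<noteq> 0"
        have vz: "v k = 0" if "k \<notin> insert a J" for k
          using supp[of k a] that by (auto simp: v_def)
        have "i \<noteq> a"
          using nz va[of j] sym[of a j] by (auto simp: S'e)
        moreover have "j \<noteq> a"
          using nz va[of i] sym[of i a] by (auto simp: S'e mult.commute)
        moreover have "i \<in> insert a J"
        proof (rule ccontr)
          assume n: "i \<notin> insert a J"
          then have "v i = 0" "S$i$j = 0" using vz[OF n] supp[of i j] by auto
          then show False using nz by (simp add: S'e)
        qed
        moreover have "j \<in> insert a J"
        proof (rule ccontr)
          assume n: "j \<notin> insert a J"
          then have "v j = 0" "S$i$j = 0" using vz[OF n] supp[of i j] by auto
          then show False using nz by (simp add: S'e)
        qed
        ultimately show "i \<in> J \<and> j \<in> J" by auto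
      qed
      obtain B' :: "real^'n^'n" where B': "B' ** transpose B' = S'" "\<And>i k. B'$i$k \<noteq> 0 \<Longrightarrow> k \<in> J"
        using insert.hyps(3) psd' supp' by blast
      have B'a: "B'$i$a = 0" for i using B'(2)[of i a] insert.hyps(2) by auto
      define B :: "real^'n^'n" where "B = (\<chi> i k. B'$i$k + (if k = a then v i else 0))"
      have "B ** transpose B = S"
      proof (simp add: vec_eq_iff, intro allI)
        fix i j
        have "(B ** transpose B)$i$j = (\<Sum>k\<in>UNIV. B'$i$k * B'$j$k + (if k = a then v i * v j else 0))"
          unfolding gram_entry B_def by (intro sum.cong refl) (auto simp: B'a algebra_simps)
        also have "\<dots> = S'$i$j + v i * v j"
          by (simp add: sum.distrib B'(1)[symmetric] gram_entry)
        also have "\<dots> = S$i$j" by (simp add: S'e)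
        finally show "(B ** transpose B)$i$j = S$i$j" .
      qed
      moreover have "\<forall>i k. B$i$k \<noteq> 0 \<longrightarrow> k \<in> insert a J"
        using B'(2) by (auto simp: B_def split: if_splits)
      ultimately show ?thesis by blast
    qed
  qed
qed

lemma cov_factor_ok:
  fixes S :: "real^'n::finite^'n"
  assumes "psd S"
  shows "cov_factor S ** transpose (cov_factor S) = S"
proof -
  have "\<exists>B::real^'n^'n. B ** transpose B = S"
    using factor_aux[of "UNIV::'n set"] assms by auto
  then show ?thesis unfolding cov_factor_def by (rule someI_ex)
qed


lemma sq_sum: "(\<Sum>i\<in>A. f i)^2 = (\<Sum>i\<in>A. \<Sum>j\<in>A. f i * f j :: real)"
  by (simp add: power2_eq_square sum_product)

lemma var_ident:
  fixes a y :: "'a \<Rightarrow> real"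
  shows "(\<Sum>j\<in>A. a j) * (\<Sum>j\<in>A. a j * (y j)^2) - (\<Sum>j\<in>A. a j * y j)^2 =
     (\<Sum>j\<in>A. \<Sum>k\<in>A. a j * a k * (y j - y k)^2) / 2"
proof -
  have "(\<Sum>j\<in>A. \<Sum>k\<in>A. a j * a k * (y j - y k)^2) =
     (\<Sum>j\<in>A. \<Sum>k\<in>A. a j * a k * (y j)^2) + (\<Sum>j\<in>A. \<Sum>k\<in>A. a j * a k * (y k)^2)
      - 2 * (\<Sum>j\<in>A. \<Sum>k\<in>A. (a j * y j) * (a k * y k))"
  proof -
    have pt: "\<And>j k. a j * a k * (y j - y k)^2 = a j * a k * (y j)^2 + a j * a k * (y k)^2 - 2 * ((a j * y j) * (a k * y k))"
      by (simp add: power2_eq_square algebra_simps)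
    show ?thesis by (simp only: pt sum.distrib sum_subtractf sum_distrib_left)
  qed
  also have "(\<Sum>j\<in>A. \<Sum>k\<in>A. a j * a k * (y j)^2) = (\<Sum>j\<in>A. a j * (y j)^2) * (\<Sum>k\<in>A. a k)"
    unfolding sum_product by (simp add: algebra_simps)
  also have "(\<Sum>j\<in>A. \<Sum>k\<in>A. a j * a k * (y k)^2) = (\<Sum>j\<in>A. a j) * (\<Sum>j\<in>A. a j * (y j)^2)"
    unfolding sum_product by (simp add: algebra_simps)
  also have "(\<Sum>j\<in>A. \<Sum>k\<in>A. (a j * y j) * (a k * y k)) = (\<Sum>j\<in>A. a j * y j)^2"
    by (simp add: sq_sum)
  finally show ?thesis by (simp add: mult.commute)
qed

lemma inner_self_sum: "x \<bullet> x = (\<Sum>i\<in>UNIV. (x$i)^2)"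
  by (simp add: inner_vec_def power2_eq_square)

definition wt :: "('n::finite \<Rightarrow> 'n \<Rightarrow> bool) \<Rightarrow> 'n \<Rightarrow> real" where
  "wt E i = 1 / sqrt (1 + degree E i)"
definition At :: "('n::finite \<Rightarrow> 'n \<Rightarrow> bool) \<Rightarrow> 'n \<Rightarrow> 'n \<Rightarrow> real" where
  "At E i j = (if E i j then 1 else 0) + (if i = j then 1 else 0)"

lemma degree_nonneg: "0 \<le> degree E i"
  by (simp add: degree_def adj_mat_def sum_nonneg)

lemma At_rowsum: "(\<Sum>j\<in>UNIV. At E i j) = 1 + degree E i"
  by (simp add: At_def degree_def adj_mat_def sum.distrib)

lemma At_nonneg: "0 \<le> At E i j" by (simp add: At_def)
lemma At_diag: "1 \<le> At E i i" by (simp add: At_def)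

lemma wt_pos: "0 < wt E i"
  using degree_nonneg[of E i] by (simp add: wt_def)

lemma wt_sq: "(wt E i)^2 * (1 + degree E i) = 1"
  using degree_nonneg[of E i] by (simp add: wt_def power_divide)

lemma sum_delta_l:
  fixes f c :: "'k::finite \<Rightarrow> real"
  shows "(\<Sum>k\<in>UNIV. (if i = k then c k else 0) * f k) = c i * f i"
proof -
  have "(\<Sum>k\<in>UNIV. (if i = k then c k else 0) * f k) = (\<Sum>k\<in>UNIV. if i = k then c k * f k else 0)"
    by (intro sum.cong) auto
  then show ?thesis by simp
qed
lemma sum_delta_r:
  fixes f c :: "'k::finite \<Rightarrow> real"
  shows "(\<Sum>k\<in>UNIV. f k * (if k = j then c k else 0)) = f j * c j"
proof -
  have "(\<Sum>k\<in>UNIV. f k * (if k = j then c k else 0)) = (\<Sum>k\<in>UNIV. if k = j then f k * c k else 0)"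
    by (intro sum.cong) auto
  then show ?thesis by simp
qed

lemma norm_adj_entry: "norm_adj E $ i $ j = wt E i * At E i j * wt E j"
proof -
  have e1: "(Dtil_inv_sqrt E ** M)$i$k = wt E i * M$i$k" for M :: "real^'a^'a" and i k
  proof -
    have "(\<Sum>l\<in>UNIV. Dtil_inv_sqrt E $i$l * M$l$k) = (\<Sum>l\<in>UNIV. if l = i then wt E i * M$i$k else 0)"
      by (intro sum.cong) (auto simp: Dtil_inv_sqrt_def wt_def)
    then show ?thesis unfolding mm_entry by simp
  qed
  have e2: "(M ** Dtil_inv_sqrt E)$i$j = M$i$j * wt E j" for M :: "real^'a^'a" and i j
  proof -
    have "(\<Sum>l\<in>UNIV. M$i$l * Dtil_inv_sqrt E $l$j) = (\<Sum>l\<in>UNIV. if l = j then M$i$j * wt E j else 0)"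
      by (intro sum.cong) (auto simp: Dtil_inv_sqrt_def wt_def)
    then show ?thesis unfolding mm_entry by simp
  qed
  have e3: "(adj_mat E + mat 1)$i$j = At E i j"
    by (simp add: adj_mat_def mat_def At_def)
  show ?thesis unfolding norm_adj_def e2 e1 e3 ..
qed

lemma norm_lap_mv: "norm_lap E *v x = x - norm_adj E *v x"
  by (simp add: norm_lap_def matrix_vector_mult_diff_rdistrib)

lemma inner_sum: "x \<bullet> y = (\<Sum>i\<in>UNIV. x$i * y$i)"
  by (simp add: inner_vec_def)

lemma mv_entry: "(M *v x) $ i = (\<Sum>j\<in>UNIV. M$i$j * x$j)"
  by (simp add: matrix_vector_mult_def)

context
  fixes E :: "'n::finite \<Rightarrow> 'n \<Rightarrow> bool"
  assumes symE: "\<And>i j. E i j \<longleftrightarrow> E j i"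
begin

lemma At_sym: "At E i j = At E j i"
  using symE by (auto simp: At_def)

lemma norm_adj_sym: "norm_adj E $ i $ j = norm_adj E $ j $ i"
  by (simp add: norm_adj_entry At_sym)

lemma norm_adj_transpose: "transpose (norm_adj E) = norm_adj E"
  by (simp add: vec_eq_iff norm_adj_sym)

lemma adj_selfadj: "(norm_adj E *v u) \<bullet> v = u \<bullet> (norm_adj E *v v)"
proof -
  have "(norm_adj E *v u) \<bullet> v = (\<Sum>i\<in>UNIV. \<Sum>j\<in>UNIV. norm_adj E $i$j * u$j * v$i)"
    by (simp add: inner_sum mv_entry sum_distrib_right)
  also have "\<dots> = (\<Sum>j\<in>UNIV. \<Sum>i\<in>UNIV. norm_adj E $i$j * u$j * v$i)"
    by (rule sum.swap)
  also have "\<dots> = u \<bullet> (norm_adj E *v v)"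
    by (simp add: inner_sum mv_entry sum_distrib_left norm_adj_sym algebra_simps)
  finally show ?thesis .
qed

abbreviation yv :: "real^'n \<Rightarrow> 'n \<Rightarrow> real" where
  "yv x i \<equiv> wt E i * x$i"

lemma xsq_y: "(x$i)^2 = (1 + degree E i) * (yv x i)^2"
proof -
  have "(1 + degree E i) * (yv x i)^2 = ((wt E i)^2 * (1 + degree E i)) * (x$i)^2"
    by (simp add: power_mult_distrib algebra_simps)
  then show ?thesis by (simp add: wt_sq)
qed

lemma norm_sq_y: "x \<bullet> x = (\<Sum>i\<in>UNIV. \<Sum>j\<in>UNIV. At E i j * (yv x j)^2)"
proof -
  have "x \<bullet> x = (\<Sum>j\<in>UNIV. (1 + degree E j) * (yv x j)^2)"
    unfolding inner_self_sum by (simp add: xsq_y)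
  also have "\<dots> = (\<Sum>j\<in>UNIV. \<Sum>i\<in>UNIV. At E i j * (yv x j)^2)"
    by (simp add: At_rowsum[symmetric] sum_distrib_right At_sym[of _ "_"])
  also have "\<dots> = (\<Sum>i\<in>UNIV. \<Sum>j\<in>UNIV. At E i j * (yv x j)^2)"
    by (rule sum.swap)
  finally show ?thesis .
qed

lemma norm_sq_y2: "x \<bullet> x = (\<Sum>i\<in>UNIV. \<Sum>j\<in>UNIV. At E i j * (yv x i)^2)"
proof -
  have "x \<bullet> x = (\<Sum>j\<in>UNIV. (1 + degree E j) * (yv x j)^2)"
    unfolding inner_self_sum by (simp add: xsq_y)
  then show ?thesis
    by (simp add: At_rowsum[symmetric] sum_distrib_right)
qed

lemma adj_mv_y: "(norm_adj E *v x) $ i = wt E i * (\<Sum>j\<in>UNIV. At E i j * yv x j)"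
  by (simp add: mv_entry norm_adj_entry sum_distrib_left algebra_simps)

lemma qadj_y: "x \<bullet> (norm_adj E *v x) = (\<Sum>i\<in>UNIV. \<Sum>j\<in>UNIV. At E i j * yv x i * yv x j)"
  by (simp add: inner_sum adj_mv_y sum_distrib_left algebra_simps)

lemma qlap_y: "x \<bullet> (norm_lap E *v x) = (\<Sum>i\<in>UNIV. \<Sum>j\<in>UNIV. At E i j * (yv x i - yv x j)^2) / 2"
proof -
  have "x \<bullet> (norm_lap E *v x) = x \<bullet> x - x \<bullet> (norm_adj E *v x)"
    by (simp add: norm_lap_mv inner_diff_right)
  also have "\<dots> = ((x \<bullet> x) + (x \<bullet> x) - 2 * (x \<bullet> (norm_adj E *v x))) / 2" by simp
  also have "\<dots> = (\<Sum>i\<in>UNIV. \<Sum>j\<in>UNIV. At E i j * (yv x i - yv x j)^2) / 2"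
  proof -
    have pt: "\<And>i j. At E i j * (yv x i - yv x j)^2 = At E i j * (yv x i)^2 + At E i j * (yv x j)^2 - 2 * (At E i j * yv x i * yv x j)"
      by (simp add: power2_eq_square algebra_simps)
    have "(\<Sum>i\<in>UNIV. \<Sum>j\<in>UNIV. At E i j * (yv x i - yv x j)^2) =
      (\<Sum>i\<in>UNIV. \<Sum>j\<in>UNIV. At E i j * (yv x i)^2) + (\<Sum>i\<in>UNIV. \<Sum>j\<in>UNIV. At E i j * (yv x j)^2)
      - 2 * (\<Sum>i\<in>UNIV. \<Sum>j\<in>UNIV. At E i j * yv x i * yv x j)"
      by (simp only: pt sum.distrib sum_subtractf sum_distrib_left)
    then show ?thesis using norm_sq_y2[of x] norm_sq_y[of x] qadj_y[of x] by simp
  qed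
  finally show ?thesis .
qed

lemma qlap_nonneg: "0 \<le> x \<bullet> (norm_lap E *v x)"
proof -
  have "0 \<le> (\<Sum>i\<in>UNIV. \<Sum>j\<in>UNIV. At E i j * (yv x i - yv x j)^2)"
    by (intro sum_nonneg mult_nonneg_nonneg At_nonneg zero_le_power2)
  then show ?thesis unfolding qlap_y by simp
qed

lemma qlap_le: "x \<bullet> (norm_lap E *v x) \<le> 2 * (x \<bullet> x)"
proof -
  have "(\<Sum>i\<in>UNIV. \<Sum>j\<in>UNIV. At E i j * (yv x i - yv x j)^2) \<le>
        (\<Sum>i\<in>UNIV. \<Sum>j\<in>UNIV. 2 * (At E i j * (yv x i)^2) + 2 * (At E i j * (yv x j)^2))"
  proof (intro sum_mono)
    fix i j
    have e: "2 * (yv x i)^2 + 2 * (yv x j)^2 - (yv x i - yv x j)^2 = (yv x i + yv x j)^2"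
      by (simp add: power2_eq_square algebra_simps)
    have "(yv x i - yv x j)^2 \<le> 2 * (yv x i)^2 + 2 * (yv x j)^2"
      using e zero_le_power2[of "yv x i + yv x j"] by linarith
    then have "At E i j * (yv x i - yv x j)^2 \<le> At E i j * (2 * (yv x i)^2 + 2 * (yv x j)^2)"
      using At_nonneg[of E i j] by (rule mult_left_mono)
    then show "At E i j * (yv x i - yv x j)^2 \<le> 2 * (At E i j * (yv x i)^2) + 2 * (At E i j * (yv x j)^2)"
      by (simp add: algebra_simps)
  qed
  also have "\<dots> = 2 * (\<Sum>i\<in>UNIV. \<Sum>j\<in>UNIV. At E i j * (yv x i)^2) + 2 * (\<Sum>i\<in>UNIV. \<Sum>j\<in>UNIV. At E i j * (yv x j)^2)"
    by (simp only: sum.distrib sum_distrib_left)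
  also have "\<dots> = 2 * (x \<bullet> x) + 2 * (x \<bullet> x)"
    by (simp only: norm_sq_y2[of x, symmetric] norm_sq_y[of x, symmetric])
  finally show ?thesis unfolding qlap_y by simp
qed

lemma qlap_inner: "x \<bullet> (norm_lap E *v x) = x \<bullet> x - x \<bullet> (norm_adj E *v x)"
  by (simp add: norm_lap_mv inner_diff_right)

lemma qlap_adj_le: "(norm_adj E *v x) \<bullet> (norm_lap E *v (norm_adj E *v x)) \<le> x \<bullet> (norm_lap E *v x)"
proof -
  define A where "A = norm_adj E"
  define a where "a = A *v x"
  define u where "u = x - a"
  have Au: "A *v u = a - A *v a" by (simp add: u_def a_def matrix_vector_mult_diff_distrib)
  have sa: "x \<bullet> (A *v a) = a \<bullet> a" using adj_selfadj[of x a] by (simp add: A_def a_def inner_commute)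
  have uu: "u \<bullet> u = x \<bullet> x - 2 * (x \<bullet> a) + a \<bullet> a"
    by (simp add: u_def inner_diff_left inner_diff_right inner_commute)
  have uAu: "u \<bullet> (A *v u) = x \<bullet> a - x \<bullet> (A *v a) - a \<bullet> a + a \<bullet> (A *v a)"
    unfolding Au unfolding u_def by (simp add: inner_diff_left inner_diff_right inner_commute)
  have l1: "u \<bullet> (A *v u) = u \<bullet> u - u \<bullet> (norm_lap E *v u)" by (simp add: qlap_inner A_def)
  have l2: "u \<bullet> (norm_lap E *v u) \<le> 2 * (u \<bullet> u)" by (rule qlap_le)
  have q1: "a \<bullet> (norm_lap E *v a) = a \<bullet> a - a \<bullet> (A *v a)" by (simp add: qlap_inner A_def)
  have q2: "x \<bullet> (norm_lap E *v x) = x \<bullet> x - x \<bullet> a" by (simp add: qlap_inner A_def a_def)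
  show ?thesis unfolding A_def[symmetric] a_def[symmetric] using sa uu uAu l1 l2 q1 q2 by linarith
qed

lemma adj_contract:
  "\<exists>c0>0. \<forall>x. (norm_adj E *v x) \<bullet> (norm_adj E *v x) \<le> x \<bullet> x - c0 * (x \<bullet> (norm_lap E *v x))"
proof -
  define c0 where "c0 = Min (range (\<lambda>i. (wt E i)^2))"
  have c0le: "c0 \<le> (wt E i)^2" for i unfolding c0_def by (rule Min_le) auto
  have "c0 \<in> range (\<lambda>i. (wt E i)^2)" unfolding c0_def by (rule Min_in) auto
  then obtain i0 where "c0 = (wt E i0)^2" by auto
  then have c0pos: "0 < c0" using wt_pos[of E i0] by simp
  show ?thesis
  proof (intro exI[of _ c0] conjI allI)
    show "0 < c0" by (fact c0pos)
    fix x :: "real^'n"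
    define S where "S i = (\<Sum>j\<in>UNIV. At E i j * yv x j)" for i
    define T where "T i = (\<Sum>j\<in>UNIV. At E i j * (yv x j)^2)" for i
    define m where "m i = (\<Sum>j\<in>UNIV. At E i j)" for i
    define V where "V i = (\<Sum>j\<in>UNIV. \<Sum>k\<in>UNIV. At E i j * At E i k * (yv x j - yv x k)^2) / 2" for i
    have wm: "(wt E i)^2 * m i = 1" for i using wt_sq[of E i] by (simp add: m_def At_rowsum)
    have V: "m i * T i - (S i)^2 = V i" for i
      unfolding m_def T_def S_def V_def by (rule var_ident)
    have ax: "(norm_adj E *v x) \<bullet> (norm_adj E *v x) = (\<Sum>i\<in>UNIV. (wt E i)^2 * (S i)^2)"
      unfolding inner_self_sum adj_mv_y S_def by (simp add: power_mult_distrib)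
    have xx: "x \<bullet> x = (\<Sum>i\<in>UNIV. (wt E i)^2 * (m i * T i))"
    proof -
      have "x \<bullet> x = (\<Sum>i\<in>UNIV. T i)" unfolding norm_sq_y T_def ..
      also have "\<dots> = (\<Sum>i\<in>UNIV. (wt E i)^2 * (m i * T i))"
        by (intro sum.cong refl) (simp add: mult.assoc[symmetric] wm)
      finally show ?thesis .
    qed
    have diff: "x \<bullet> x - (norm_adj E *v x) \<bullet> (norm_adj E *v x) = (\<Sum>i\<in>UNIV. (wt E i)^2 * V i)"
      unfolding xx ax V[symmetric] by (simp add: sum_subtractf[symmetric] algebra_simps)
    have Vlow: "(\<Sum>k\<in>UNIV. At E i k * (yv x i - yv x k)^2) / 2 \<le> V i" for i
    proof -
      have "(\<Sum>k\<in>UNIV. At E i k * (yv x i - yv x k)^2) \<le> (\<Sum>k\<in>UNIV. At E i i * At E i k * (yv x i - yv x k)^2)"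
      proof (intro sum_mono)
        fix k
        have "0 \<le> At E i k * (yv x i - yv x k)^2" by (intro mult_nonneg_nonneg At_nonneg zero_le_power2)
        then have "1 * (At E i k * (yv x i - yv x k)^2) \<le> At E i i * (At E i k * (yv x i - yv x k)^2)"
          using At_diag[of E i] by (intro mult_right_mono) auto
        then show "At E i k * (yv x i - yv x k)^2 \<le> At E i i * At E i k * (yv x i - yv x k)^2"
          by (simp add: mult.assoc)
      qed
      also have "\<dots> \<le> (\<Sum>j\<in>UNIV. \<Sum>k\<in>UNIV. At E i j * At E i k * (yv x j - yv x k)^2)"
        by (rule member_le_sum[of i UNIV "\<lambda>j. \<Sum>k\<in>UNIV. At E i j * At E i k * (yv x j - yv x k)^2"])
           (auto intro!: sum_nonneg mult_nonneg_nonneg At_nonneg)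
      finally show ?thesis unfolding V_def by simp
    qed
    have "c0 * (x \<bullet> (norm_lap E *v x)) = (\<Sum>i\<in>UNIV. c0 * ((\<Sum>k\<in>UNIV. At E i k * (yv x i - yv x k)^2) / 2))"
      unfolding qlap_y by (simp add: sum_distrib_left sum_divide_distrib)
    also have "\<dots> \<le> (\<Sum>i\<in>UNIV. (wt E i)^2 * V i)"
    proof (intro sum_mono)
      fix i
      have nn: "0 \<le> (\<Sum>k\<in>UNIV. At E i k * (yv x i - yv x k)^2) / 2"
        by (intro divide_nonneg_pos sum_nonneg mult_nonneg_nonneg At_nonneg zero_le_power2) auto
      show "c0 * ((\<Sum>k\<in>UNIV. At E i k * (yv x i - yv x k)^2) / 2) \<le> (wt E i)^2 * V i"
        by (rule mult_mono[OF c0le Vlow]) (use nn in auto)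
    qed
    finally show "(norm_adj E *v x) \<bullet> (norm_adj E *v x) \<le> x \<bullet> x - c0 * (x \<bullet> (norm_lap E *v x))"
      using diff by linarith
  qed
qed

end


definition dq :: "('n::finite \<Rightarrow> 'n \<Rightarrow> bool) \<Rightarrow> real^'n^'n \<Rightarrow> real" where
  "dq E M = (\<Sum>i\<in>UNIV. \<Sum>j\<in>UNIV. norm_lap E $i$j * M$i$j)"

lemma column_entry[simp]: "column c P $ i = P $ i $ c"
  by (simp add: column_def)

lemma tr_gram:
  fixes P :: "real^'m::finite^'n::finite"
  shows "tr (P ** transpose P) = (\<Sum>c\<in>UNIV. column c P \<bullet> column c P)"
  unfolding tr_def gram_entry inner_sum column_entry by (rule sum.swap)

lemma dq_gram:
  fixes P :: "real^'m::finite^'n::finite"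
  shows "dq E (P ** transpose P) = (\<Sum>c\<in>UNIV. column c P \<bullet> (norm_lap E *v column c P))"
proof -
  have "dq E (P ** transpose P) = (\<Sum>i\<in>UNIV. \<Sum>j\<in>UNIV. \<Sum>c\<in>UNIV. P$i$c * (norm_lap E $i$j * P$j$c))"
    unfolding dq_def gram_entry by (intro sum.cong refl) (simp add: sum_distrib_left mult_ac)
  also have "\<dots> = (\<Sum>i\<in>UNIV. \<Sum>c\<in>UNIV. \<Sum>j\<in>UNIV. P$i$c * (norm_lap E $i$j * P$j$c))"
    by (intro sum.cong refl) (rule sum.swap)
  also have "\<dots> = (\<Sum>c\<in>UNIV. \<Sum>i\<in>UNIV. \<Sum>j\<in>UNIV. P$i$c * (norm_lap E $i$j * P$j$c))"
    by (rule sum.swap)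
  also have "\<dots> = (\<Sum>c\<in>UNIV. column c P \<bullet> (norm_lap E *v column c P))"
    unfolding inner_sum mv_entry by (simp add: sum_distrib_left)
  finally show ?thesis .
qed

lemma column_mm: "column c (M ** P) = M *v column c P"
  by (simp add: vec_eq_iff mm_entry mv_entry)

lemma tr_scale: "tr (a *\<^sub>R M) = a * tr M"
  by (simp add: tr_def sum_distrib_left)

lemma dq_scale: "dq E (a *\<^sub>R M) = a * dq E M"
  by (simp add: dq_def sum_distrib_left algebra_simps)

lemma sandwich_gram:
  fixes A K :: "real^'n^'n"
  assumes "transpose A = A"
  shows "A ** (K ** transpose K) ** A = (A ** K) ** transpose (A ** K)"
proof -
  have "transpose (A ** K) = transpose K ** A" using matrix_transpose_mul[of A K] assms by simp
  then show ?thesis by (simp add: matrix_mul_assoc)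
qed

lemma sandwich_gram2:
  fixes A :: "real^'n^'n" and X :: "real^'m^'n"
  assumes "transpose A = A"
  shows "A ** X ** transpose X ** A = (A ** X) ** transpose (A ** X)"
proof -
  have "transpose (A ** X) = transpose X ** A" using matrix_transpose_mul[of A X] assms by simp
  then show ?thesis by (simp add: matrix_mul_assoc)
qed

lemma qfs_gram:
  fixes P :: "real^'m::finite^'n::finite"
  shows "qfs (P ** transpose P) x = (\<Sum>c\<in>UNIV. (\<Sum>i\<in>UNIV. x i * P$i$c)^2)"
proof -
  have "qfs (P ** transpose P) x = (\<Sum>i\<in>UNIV. \<Sum>j\<in>UNIV. \<Sum>c\<in>UNIV. (x i * P$i$c) * (x j * P$j$c))"
    unfolding qfs_def gram_entry by (intro sum.cong refl) (simp add: sum_distrib_left sum_distrib_right mult_ac)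
  also have "\<dots> = (\<Sum>i\<in>UNIV. \<Sum>c\<in>UNIV. \<Sum>j\<in>UNIV. (x i * P$i$c) * (x j * P$j$c))"
    by (rule sum.cong[OF refl], rule sum.swap)
  also have "\<dots> = (\<Sum>c\<in>UNIV. \<Sum>i\<in>UNIV. \<Sum>j\<in>UNIV. (x i * P$i$c) * (x j * P$j$c))"
    by (rule sum.swap)
  also have "\<dots> = (\<Sum>c\<in>UNIV. (\<Sum>i\<in>UNIV. x i * P$i$c)^2)"
    by (simp add: sq_sum)
  finally show ?thesis .
qed

lemma gram_psd:
  fixes P :: "real^'m::finite^'n::finite"
  shows "psd (P ** transpose P)"
  unfolding psd_def qfs_gram
proof (intro conjI allI)
  fix i j show "(P ** transpose P) $ i $ j = (P ** transpose P) $ j $ i"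
    unfolding gram_entry by (intro sum.cong refl) (rule mult.commute)
next
  fix x show "0 \<le> (\<Sum>c\<in>UNIV. (\<Sum>i\<in>UNIV. x i * P $ i $ c)\<^sup>2)"
    by (intro sum_nonneg zero_le_power2)
qed

lemma qfs_scale: "qfs (a *\<^sub>R M) x = a * qfs M x"
  unfolding qfs_def by (simp add: sum_distrib_left mult_ac)

lemma psd_scale: "psd M \<Longrightarrow> 0 \<le> a \<Longrightarrow> psd (a *\<^sub>R M)"
  unfolding psd_def qfs_scale by auto

lemma psd_tr_nonneg: "psd M \<Longrightarrow> 0 \<le> tr M"
  unfolding tr_def by (intro sum_nonneg) (rule psd_schur(2))


definition hG :: "real^'n::finite^'n \<Rightarrow> 'n \<Rightarrow> ('n \<Rightarrow> real) \<Rightarrow> real" where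
  "hG S i z = (\<Sum>k\<in>UNIV. cov_factor S $ i $ k * z k)"

lemma gauss_G_entry:
  "gauss_G relu S $ i $ j = (\<integral>z. relu (hG S i z) * relu (hG S j z) \<partial>PSN (UNIV::'n::finite set))"
  by (simp add: gauss_G_def hG_def mv_entry)

lemma hG_meas[measurable]: "hG S i \<in> borel_measurable (PSN UNIV)"
  unfolding hG_def by measurable

lemma hG_sq_int: "integrable (PSN UNIV) (\<lambda>z. hG S i z * hG S i z)"
  unfolding hG_def by (rule PSN_lin_id(1)) simp

lemma relu_prod_bound: "\<bar>relu a * relu b\<bar> \<le> a * a + b * b"
proof -
  have "\<bar>relu a * relu b\<bar> \<le> \<bar>a\<bar> * \<bar>b\<bar>"
    unfolding abs_mult by (intro mult_mono relu_abs) auto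
  also have "\<dots> \<le> a * a + b * b"
  proof -
    have z: "0 \<le> \<bar>a\<bar> * \<bar>b\<bar>" by simp
    have h: "2 * \<bar>a\<bar> * \<bar>b\<bar> \<le> \<bar>a\<bar>^2 + \<bar>b\<bar>^2" by (rule sum_squares_bound)
    have "\<bar>a\<bar>^2 = a * a" "\<bar>b\<bar>^2 = b * b" by (simp_all add: power2_eq_square)
    then show ?thesis using z h by linarith
  qed
  finally show ?thesis .
qed

lemma relu_prod_int: "integrable (PSN UNIV) (\<lambda>z. relu (hG S i z) * relu (hG S j z))"
proof (rule Bochner_Integration.integrable_bound)
  show "integrable (PSN UNIV) (\<lambda>z. hG S i z * hG S i z + hG S j z * hG S j z)"
    by (intro Bochner_Integration.integrable_add hG_sq_int)
  show "(\<lambda>z. relu (hG S i z) * relu (hG S j z)) \<in> borel_measurable (PSN UNIV)" by measurable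
  show "AE z in PSN UNIV. norm (relu (hG S i z) * relu (hG S j z)) \<le> norm (hG S i z * hG S i z + hG S j z * hG S j z)"
    using relu_prod_bound by (intro AE_I2) (simp add: order.trans[OF _ abs_ge_self])
qed

lemma gauss_G_psd: "psd (gauss_G relu (S::real^'n::finite^'n))"
  unfolding psd_def
proof (intro conjI allI)
  fix i j show "gauss_G relu S $ i $ j = gauss_G relu S $ j $ i"
    unfolding gauss_G_entry by (simp add: mult.commute)
next
  fix x :: "'n \<Rightarrow> real"
  define r where "r i z = relu (hG S i z)" for i z
  have ri: "integrable (PSN UNIV) (\<lambda>z. r i z * r j z)" for i j
    unfolding r_def by (rule relu_prod_int)
  have "qfs (gauss_G relu S) x = (\<Sum>i\<in>UNIV. \<Sum>j\<in>UNIV. \<integral>z. x i * (r i z * r j z) * x j \<partial>PSN UNIV)"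
    unfolding qfs_def gauss_G_entry r_def by simp
  also have "\<dots> = (\<integral>z. (\<Sum>i\<in>UNIV. \<Sum>j\<in>UNIV. x i * (r i z * r j z) * x j) \<partial>PSN UNIV)"
    using ri by (simp add: integral_sum integrable_sum)
  also have "\<dots> = (\<integral>z. (\<Sum>i\<in>UNIV. x i * r i z)^2 \<partial>PSN UNIV)"
    by (simp add: sq_sum mult_ac)
  finally have e: "qfs (gauss_G relu S) x = (\<integral>z. (\<Sum>i\<in>UNIV. x i * r i z)^2 \<partial>PSN UNIV)" .
  have "0 \<le> (\<integral>z. (\<Sum>i\<in>UNIV. x i * r i z)^2 \<partial>PSN UNIV)"
    by (intro Bochner_Integration.integral_nonneg) simp
  then show "0 \<le> qfs (gauss_G relu S) x" using e by simp
qed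

lemma gauss_G_diag:
  assumes "psd S"
  shows "gauss_G relu S $ i $ i = S $ i $ i / 2"
proof -
  have f: "cov_factor S ** transpose (cov_factor S) = S" by (rule cov_factor_ok[OF assms])
  have "gauss_G relu S $ i $ i = (\<integral>z. (relu (\<Sum>k\<in>UNIV. cov_factor S $ i $ k * z k))^2 \<partial>PSN UNIV)"
    unfolding gauss_G_entry hG_def by (simp add: power2_eq_square)
  also have "\<dots> = (\<Sum>k\<in>UNIV. (cov_factor S $ i $ k)^2) / 2"
    by (rule PSN_relu_sq(2)) simp
  also have "\<dots> = S $ i $ i / 2"
    using gram_entry[of "cov_factor S" i i] f by (simp add: power2_eq_square)
  finally show ?thesis .
qed

lemma tr_gauss_G: "psd S \<Longrightarrow> tr (gauss_G relu S) = tr S / 2"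
  by (simp add: tr_def gauss_G_diag sum_divide_distrib)

lemma int_sum2:
  fixes f :: "'i \<Rightarrow> 'j \<Rightarrow> 'a \<Rightarrow> real"
  assumes "\<And>i j. i \<in> A \<Longrightarrow> j \<in> B \<Longrightarrow> integrable M (\<lambda>x. f i j x)"
  shows "integrable M (\<lambda>x. \<Sum>i\<in>A. \<Sum>j\<in>B. f i j x)"
    "integral\<^sup>L M (\<lambda>x. \<Sum>i\<in>A. \<Sum>j\<in>B. f i j x) = (\<Sum>i\<in>A. \<Sum>j\<in>B. integral\<^sup>L M (\<lambda>x. f i j x))"
proof -
  show "integrable M (\<lambda>x. \<Sum>i\<in>A. \<Sum>j\<in>B. f i j x)"
    by (auto intro!: integrable_sum assms)
  have "integral\<^sup>L M (\<lambda>x. \<Sum>i\<in>A. \<Sum>j\<in>B. f i j x) = (\<Sum>i\<in>A. integral\<^sup>L M (\<lambda>x. \<Sum>j\<in>B. f i j x))"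
    by (rule Bochner_Integration.integral_sum) (auto intro!: integrable_sum assms)
  also have "\<dots> = (\<Sum>i\<in>A. \<Sum>j\<in>B. integral\<^sup>L M (\<lambda>x. f i j x))"
    by (intro sum.cong refl Bochner_Integration.integral_sum) (auto intro: assms)
  finally show "integral\<^sup>L M (\<lambda>x. \<Sum>i\<in>A. \<Sum>j\<in>B. f i j x) = (\<Sum>i\<in>A. \<Sum>j\<in>B. integral\<^sup>L M (\<lambda>x. f i j x))" .
qed

lemma gauss_emb_sum: "gauss_emb S Z i c = (\<Sum>k\<in>UNIV. cov_factor S $ i $ k * Z (k, c))"
  by (simp add: gauss_emb_def)

lemma emb_moment:
  fixes S :: "real^'n::finite^'n"
  assumes c: "c < C"
  shows "integrable (std_gauss_mat C) (\<lambda>Z. gauss_emb S Z i c * gauss_emb S Z j c)"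
    "integral\<^sup>L (std_gauss_mat C) (\<lambda>Z. gauss_emb S Z i c * gauss_emb S Z j c) =
       (\<Sum>k\<in>UNIV. cov_factor S $ i $ k * cov_factor S $ j $ k)"
proof -
  have inj: "inj_on (\<lambda>k::'n. (k, c)) UNIV" by (auto simp: inj_on_def)
  have sub: "(\<lambda>k::'n. (k, c)) ` UNIV \<subseteq> UNIV \<times> {..<C}" using c by auto
  show "integrable (std_gauss_mat C) (\<lambda>Z. gauss_emb S Z i c * gauss_emb S Z j c)"
    unfolding std_gauss_mat_def gauss_emb_sum
    using PSN_lin(1)[OF _ _ inj sub, of "\<lambda>k. cov_factor S $ i $ k" "\<lambda>k. cov_factor S $ j $ k"] by simp
  show "integral\<^sup>L (std_gauss_mat C) (\<lambda>Z. gauss_emb S Z i c * gauss_emb S Z j c) =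
       (\<Sum>k\<in>UNIV. cov_factor S $ i $ k * cov_factor S $ j $ k)"
    unfolding std_gauss_mat_def gauss_emb_sum
    using PSN_lin(2)[OF _ _ inj sub, of "\<lambda>k. cov_factor S $ i $ k" "\<lambda>k. cov_factor S $ j $ k"] by simp
qed

lemma emb_moment_S:
  fixes S :: "real^'n::finite^'n"
  assumes "psd S" "c < C"
  shows "integral\<^sup>L (std_gauss_mat C) (\<lambda>Z. gauss_emb S Z i c * gauss_emb S Z j c) = S $ i $ j"
  using emb_moment(2)[OF assms(2), of S i j] cov_factor_ok[OF assms(1)] gram_entry[of "cov_factor S" i j]
  by simp

lemma FSP_formula:
  fixes S :: "real^'n::finite^'n"
  assumes "psd S"
  shows "(\<integral>Z. frob_sq_emb C (gauss_emb S Z) / f \<partial>std_gauss_mat C) = real C * tr S / f"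
proof -
  have "(\<integral>Z. frob_sq_emb C (gauss_emb S Z) \<partial>std_gauss_mat C) =
        (\<integral>Z. (\<Sum>i\<in>UNIV. \<Sum>c<C. gauss_emb S Z i c * gauss_emb S Z i c) \<partial>std_gauss_mat C)"
    by (simp add: frob_sq_emb_def power2_eq_square)
  also have "\<dots> = (\<Sum>i\<in>UNIV. \<Sum>c<C. integral\<^sup>L (std_gauss_mat C) (\<lambda>Z. gauss_emb S Z i c * gauss_emb S Z i c))"
    by (rule int_sum2(2)) (auto intro: emb_moment(1))
  also have "\<dots> = (\<Sum>i\<in>UNIV. \<Sum>c<C. S $ i $ i)"
    using emb_moment_S[OF assms] by simp
  also have "\<dots> = real C * tr S"
    by (simp add: tr_def sum_distrib_left)
  finally show ?thesis by simp
qed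

lemma dir_formula:
  fixes S :: "real^'n::finite^'n"
  assumes "psd S"
  shows "integrable (std_gauss_mat C) (\<lambda>Z. dirichlet E C (gauss_emb S Z))"
    "(\<integral>Z. dirichlet E C (gauss_emb S Z) \<partial>std_gauss_mat C) = real C * dq E S"
proof -
  have eq: "dirichlet E C (gauss_emb S Z) =
      (\<Sum>c<C. \<Sum>i\<in>UNIV. \<Sum>j\<in>UNIV. norm_lap E $ i $ j * (gauss_emb S Z i c * gauss_emb S Z j c))" for Z
    by (simp add: dirichlet_def mult_ac)
  have ii: "integrable (std_gauss_mat C) (\<lambda>Z. \<Sum>i\<in>UNIV. \<Sum>j\<in>UNIV. norm_lap E $ i $ j * (gauss_emb S Z i c * gauss_emb S Z j c))"
     "integral\<^sup>L (std_gauss_mat C) (\<lambda>Z. \<Sum>i\<in>UNIV. \<Sum>j\<in>UNIV. norm_lap E $ i $ j * (gauss_emb S Z i c * gauss_emb S Z j c))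
       = (\<Sum>i\<in>UNIV. \<Sum>j\<in>UNIV. norm_lap E $ i $ j * integral\<^sup>L (std_gauss_mat C) (\<lambda>Z. gauss_emb S Z i c * gauss_emb S Z j c))"
     if c: "c \<in> {..<C}" for c
    using int_sum2[of UNIV UNIV "std_gauss_mat C" "\<lambda>i j Z. norm_lap E $ i $ j * (gauss_emb S Z i c * gauss_emb S Z j c)"]
      emb_moment(1)[of c C S] c by auto
  show "integrable (std_gauss_mat C) (\<lambda>Z. dirichlet E C (gauss_emb S Z))"
    unfolding eq using ii(1) by (auto intro!: integrable_sum)
  have "(\<integral>Z. dirichlet E C (gauss_emb S Z) \<partial>std_gauss_mat C) =
      (\<Sum>c<C. \<Sum>i\<in>UNIV. \<Sum>j\<in>UNIV. norm_lap E $ i $ j * integral\<^sup>L (std_gauss_mat C) (\<lambda>Z. gauss_emb S Z i c * gauss_emb S Z j c))"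
    unfolding eq using ii by (simp add: integral_sum)
  also have "\<dots> = (\<Sum>c<C. \<Sum>i\<in>UNIV. \<Sum>j\<in>UNIV. norm_lap E $ i $ j * S $ i $ j)"
    using emb_moment_S[OF assms] by simp
  also have "\<dots> = real C * dq E S" by (simp add: dq_def)
  finally show "(\<integral>Z. dirichlet E C (gauss_emb S Z) \<partial>std_gauss_mat C) = real C * dq E S" .
qed


lemma Zcomp_meas[measurable]: "(\<lambda>Z. Z j) \<in> borel_measurable (PSN I)"
proof (cases "j \<in> I")
  case True then show ?thesis by measurable
next
  case False
  have "(\<lambda>Z. Z j) \<in> borel_measurable (PSN I) \<longleftrightarrow> (\<lambda>Z. undefined::real) \<in> borel_measurable (PSN I)"
    by (rule measurable_cong) (use False in \<open>auto simp: space_PiM PiE_def extensional_def\<close>)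
  then show ?thesis by simp
qed

lemma avg_max:
  fixes f :: "'a \<Rightarrow> real"
  assumes "finite A" "A \<noteq> {}"
  shows "\<exists>i\<in>A. sum f A \<le> real (card A) * f i"
proof (rule ccontr)
  assume "\<not> ?thesis"
  then have "\<And>i. i \<in> A \<Longrightarrow> real (card A) * f i < sum f A" by auto
  then have "(\<Sum>i\<in>A. real (card A) * f i) < (\<Sum>i\<in>A. sum f A)"
    using assms by (intro sum_strict_mono) auto
  then show False by (simp add: sum_distrib_left)
qed

lemma dir_cols: "dirichlet E C H = (\<Sum>c<C. (\<chi> i. H i c) \<bullet> (norm_lap E *v (\<chi> i. H i c)))"
  unfolding dirichlet_def inner_sum mv_entry by (simp add: sum_distrib_left mult_ac)

lemma frob_cols: "frob_sq_emb C H = (\<Sum>c<C. (\<chi> i. H i c) \<bullet> (\<chi> i. H i c))"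
  unfolding frob_sq_emb_def inner_sum by (simp add: sum.swap[of _ UNIV "{..<C}"] power2_eq_square)

context
  fixes E :: "'n::finite \<Rightarrow> 'n \<Rightarrow> bool"
  assumes symE: "\<And>i j. E i j \<longleftrightarrow> E j i"
begin

lemma dir_nonneg: "0 \<le> dirichlet E C H"
  unfolding dir_cols by (intro sum_nonneg qlap_nonneg[OF symE])

lemma dir_le: "dirichlet E C H \<le> 2 * frob_sq_emb C H"
  unfolding dir_cols frob_cols sum_distrib_left by (intro sum_mono qlap_le[OF symE])

lemma GEV_nonneg: "0 \<le> (\<integral>Z. dirichlet E C (gauss_emb S Z) / frob_sq_emb C (gauss_emb S Z) \<partial>std_gauss_mat C)"
  by (intro Bochner_Integration.integral_nonneg divide_nonneg_nonneg dir_nonneg)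
     (simp add: frob_sq_emb_def sum_nonneg)

lemma GEV_bound:
  fixes S :: "real^'n^'n"
  assumes ps: "psd S" and T: "0 < T" "T \<le> tr S" and d: "0 < \<delta>" and C: "1 \<le> C"
  shows "(\<integral>Z. dirichlet E C (gauss_emb S Z) / frob_sq_emb C (gauss_emb S Z) \<partial>std_gauss_mat C)
     \<le> real C * dq E S / \<delta> + 4 * real CARD('n) * sqrt \<delta> / sqrt T"
proof -
  interpret P: prob_space "std_gauss_mat C" unfolding std_gauss_mat_def by (rule prob_PSN)
  define B where "B = cov_factor S"
  have BB: "B ** transpose B = S" unfolding B_def by (rule cov_factor_ok[OF ps])
  define n where "n = real CARD('n)"
  have npos: "0 < n" by (simp add: n_def)
  obtain i0 where i0: "tr S \<le> n * S$i0$i0"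
    using avg_max[of "UNIV::'n set" "\<lambda>i. S$i$i"] by (auto simp: tr_def n_def)
  have Sii: "S$i0$i0 = (\<Sum>k\<in>UNIV. (B$i0$k)^2)"
    using gram_entry[of B i0 i0] BB by (simp add: power2_eq_square)
  obtain k0 where k0: "S$i0$i0 \<le> n * (B$i0$k0)^2"
    using avg_max[of "UNIV::'n set" "\<lambda>k. (B$i0$k)^2"] Sii by (auto simp: n_def)
  have b2: "T / (n * n) \<le> (B$i0$k0)^2"
  proof -
    have "T \<le> n * (n * (B$i0$k0)^2)" using T(2) i0 k0 npos by (meson order.trans mult_left_mono less_imp_le)
    then show ?thesis using npos by (simp add: field_simps)
  qed
  have bpos: "0 < \<bar>B$i0$k0\<bar>"
  proof -
    have "0 < T / (n * n)" using T npos by simp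
    then show ?thesis using b2 by auto
  qed
  have blow: "sqrt T / n \<le> \<bar>B$i0$k0\<bar>"
  proof -
    have "sqrt (T / (n * n)) \<le> sqrt ((B$i0$k0)^2)" using b2 by (rule real_sqrt_le_mono)
    then show ?thesis using npos by (simp add: real_sqrt_divide real_sqrt_mult)
  qed
  define I where "I = (UNIV::'n set) \<times> {..<C}"
  define w where "w p = (if snd p = 0 then B$i0$(fst p) else 0)" for p :: "'n \<times> nat"
  have hw: "gauss_emb S Z i0 0 = (\<Sum>p\<in>I. w p * Z p)" for Z
  proof -
    have "(\<Sum>p\<in>I. w p * Z p) = (\<Sum>k\<in>UNIV. \<Sum>c<C. w (k, c) * Z (k, c))"
      unfolding I_def by (simp add: sum.cartesian_product)
    also have "\<dots> = (\<Sum>k\<in>UNIV. B$i0$k * Z (k, 0))"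
    proof (intro sum.cong refl)
      fix k
      have "(\<Sum>c<C. w (k, c) * Z (k, c)) = (\<Sum>c<C. if c = 0 then B$i0$k * Z (k, c) else 0)"
        by (intro sum.cong refl) (simp add: w_def)
      also have "\<dots> = B$i0$k * Z (k, 0)" using C by simp
      finally show "(\<Sum>c<C. w (k, c) * Z (k, c)) = B$i0$k * Z (k, 0)" .
    qed
    finally show ?thesis by (simp add: gauss_emb_sum B_def)
  qed
  define A where "A = {Z \<in> space (std_gauss_mat C). \<bar>gauss_emb S Z i0 0\<bar> < sqrt \<delta>}"
  have A_eq: "A = {Z \<in> space (PSN I). \<bar>\<Sum>p\<in>I. w p * Z p\<bar> < sqrt \<delta>}"
    unfolding A_def hw std_gauss_mat_def I_def ..
  have A_meas[measurable]: "A \<in> sets (std_gauss_mat C)"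
    unfolding A_def gauss_emb_def std_gauss_mat_def by measurable
  have mA: "measure (std_gauss_mat C) A \<le> 2 * sqrt \<delta> / \<bar>B$i0$k0\<bar>"
  proof -
    have "measure (PSN I) {Z \<in> space (PSN I). \<bar>\<Sum>p\<in>I. w p * Z p\<bar> < sqrt \<delta>} \<le> 2 * sqrt \<delta> / \<bar>w (k0, 0)\<bar>"
      by (rule PSN_smallball) (use C bpos d in \<open>auto simp: I_def w_def\<close>)
    then show ?thesis unfolding A_eq std_gauss_mat_def I_def[symmetric] by (simp add: w_def)
  qed
  have mA2: "2 * sqrt \<delta> / \<bar>B$i0$k0\<bar> \<le> 2 * sqrt \<delta> * n / sqrt T"
  proof -
    have "2 * sqrt \<delta> / \<bar>B$i0$k0\<bar> \<le> 2 * sqrt \<delta> / (sqrt T / n)"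
      using blow d T npos bpos by (intro divide_left_mono) auto
    then show ?thesis by simp
  qed
  define D where "D Z = dirichlet E C (gauss_emb S Z)" for Z
  define F where "F Z = frob_sq_emb C (gauss_emb S Z)" for Z
  have D_meas[measurable]: "D \<in> borel_measurable (std_gauss_mat C)"
    unfolding D_def dirichlet_def gauss_emb_def std_gauss_mat_def by measurable
  have F_meas[measurable]: "F \<in> borel_measurable (std_gauss_mat C)"
    unfolding F_def frob_sq_emb_def gauss_emb_def std_gauss_mat_def by measurable
  have Dint: "integrable (std_gauss_mat C) D" unfolding D_def by (rule dir_formula(1)[OF ps])
  have Dval: "integral\<^sup>L (std_gauss_mat C) D = real C * dq E S" unfolding D_def by (rule dir_formula(2)[OF ps])
  have ptw: "D Z / F Z \<le> D Z / \<delta> + 2 * indicator A Z" if Z: "Z \<in> space (std_gauss_mat C)" for Z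
  proof (cases "\<delta> \<le> F Z")
    case True
    have "D Z / F Z \<le> D Z / \<delta>"
      using True d dir_nonneg by (auto simp: D_def intro!: divide_left_mono)
    then show ?thesis by (simp add: indicator_def)
  next
    case False
    have "(gauss_emb S Z i0 0)^2 \<le> F Z"
    proof -
      have "(gauss_emb S Z i0 0)^2 \<le> (\<Sum>c<C. (gauss_emb S Z i0 c)^2)"
        by (rule member_le_sum[of 0 "{..<C}" "\<lambda>c. (gauss_emb S Z i0 c)^2"]) (use C in auto)
      also have "\<dots> \<le> F Z" unfolding F_def frob_sq_emb_def
        by (rule member_le_sum[of i0 UNIV "\<lambda>i. \<Sum>c<C. (gauss_emb S Z i c)^2"]) (auto intro: sum_nonneg)
      finally show ?thesis .
    qed
    then have "(gauss_emb S Z i0 0)^2 < \<delta>" using False by simp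
    then have "\<bar>gauss_emb S Z i0 0\<bar> < sqrt \<delta>" using real_sqrt_less_mono by fastforce
    then have inA: "indicator A Z = (1::real)" using Z by (simp add: A_def)
    have "D Z / F Z \<le> 2"
    proof (cases "F Z = 0")
      case True then show ?thesis by simp
    next
      case False
      have "0 \<le> F Z" by (simp add: F_def frob_sq_emb_def sum_nonneg)
      then have "0 < F Z" using False by simp
      then show ?thesis using dir_le[of C "gauss_emb S Z"] by (simp add: D_def F_def field_simps)
    qed
    moreover have "0 \<le> D Z / \<delta>" using d dir_nonneg by (simp add: D_def)
    ultimately show ?thesis using inA by simp
  qed
  have rint: "integrable (std_gauss_mat C) (\<lambda>Z. D Z / F Z)"
  proof (rule Bochner_Integration.integrable_bound)
    show "integrable (std_gauss_mat C) (\<lambda>Z. 2::real)" by simp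
    show "(\<lambda>Z. D Z / F Z) \<in> borel_measurable (std_gauss_mat C)" by measurable
    show "AE Z in std_gauss_mat C. norm (D Z / F Z) \<le> norm (2::real)"
    proof (intro AE_I2)
      fix Z
      have "0 \<le> D Z" by (simp add: D_def dir_nonneg)
      moreover have "0 \<le> F Z" by (simp add: F_def frob_sq_emb_def sum_nonneg)
      moreover have "D Z / F Z \<le> 2"
      proof (cases "F Z = 0")
        case True then show ?thesis by simp
      next
        case False
        then have "0 < F Z" using \<open>0 \<le> F Z\<close> by simp
        then show ?thesis using dir_le[of C "gauss_emb S Z"] by (simp add: D_def F_def field_simps)
      qed
      ultimately show "norm (D Z / F Z) \<le> norm (2::real)" by simp
    qed
  qed
  have iint: "integrable (std_gauss_mat C) (\<lambda>Z. D Z / \<delta> + 2 * indicator A Z)"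
    using Dint by (intro Bochner_Integration.integrable_add integrable_divide integrable_mult_right
        integrable_real_indicator) (auto simp: P.emeasure_eq_measure)
  have "(\<integral>Z. D Z / F Z \<partial>std_gauss_mat C) \<le> (\<integral>Z. D Z / \<delta> + 2 * indicator A Z \<partial>std_gauss_mat C)"
    using rint iint ptw by (intro integral_mono) auto
  also have "\<dots> = (\<integral>Z. D Z / \<delta> \<partial>std_gauss_mat C) + (\<integral>Z. 2 * indicator A Z \<partial>std_gauss_mat C)"
    by (rule Bochner_Integration.integral_add)
       (use Dint in \<open>auto intro!: integrable_real_indicator simp: P.emeasure_eq_measure\<close>)
  also have "\<dots> = real C * dq E S / \<delta> + 2 * measure (std_gauss_mat C) A"
    using Dval by (simp add: P.emeasure_eq_measure)
  also have "\<dots> \<le> real C * dq E S / \<delta> + 2 * (2 * sqrt \<delta> * n / sqrt T)"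
    using mA mA2 by simp
  finally show ?thesis by (simp add: D_def F_def n_def mult_ac)
qed

end


lemma frob_pos:
  fixes X :: "real^'d::finite^'n::finite"
  assumes "X \<noteq> 0"
  shows "0 < frob_sq X"
proof -
  obtain i j where ij: "X$i$j \<noteq> 0" using assms by (auto simp: vec_eq_iff)
  have "(X$i$j)^2 \<le> (\<Sum>j\<in>UNIV. (X$i$j)^2)"
    by (rule member_le_sum) auto
  also have "\<dots> \<le> frob_sq X" unfolding frob_sq_def
    by (rule member_le_sum[of i UNIV "\<lambda>i. \<Sum>j\<in>UNIV. (X$i$j)^2"]) (auto intro: sum_nonneg)
  moreover have "0 < (X$i$j)^2" using ij by simp
  ultimately show ?thesis by linarith
qed

lemma frob_tr: "frob_sq X = tr (X ** transpose X)"
  by (simp add: frob_sq_def tr_def gram_entry power2_eq_square)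

context
  fixes E :: "'n::finite \<Rightarrow> 'n \<Rightarrow> bool"
  assumes symE: "\<And>i j. E i j \<longleftrightarrow> E j i"
begin

lemma Sig1_eq:
  fixes X :: "real^'d::finite^'n"
  shows "nngp_cov relu E X s (Suc 0) = (s / real CARD('d)) *\<^sub>R ((norm_adj E ** X) ** transpose (norm_adj E ** X))"
  using sandwich_gram2[OF norm_adj_transpose[where E=E, OF symE], of X] by simp

lemma SigSS_eq:
  "nngp_cov relu E X s (Suc (Suc m)) = s *\<^sub>R ((norm_adj E ** cov_factor (gauss_G relu (nngp_cov relu E X s (Suc m))))
      ** transpose (norm_adj E ** cov_factor (gauss_G relu (nngp_cov relu E X s (Suc m)))))"
proof -
  define G where "G = gauss_G relu (nngp_cov relu E X s (Suc m))"
  have f: "cov_factor G ** transpose (cov_factor G) = G" unfolding G_def by (rule cov_factor_ok[OF gauss_G_psd])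
  have "norm_adj E ** (cov_factor G ** transpose (cov_factor G)) ** norm_adj E
     = (norm_adj E ** cov_factor G) ** transpose (norm_adj E ** cov_factor G)"
    by (rule sandwich_gram[OF norm_adj_transpose[where E=E, OF symE]])
  then show ?thesis unfolding f by (simp add: G_def)
qed

lemma Sig_psd: "0 \<le> s \<Longrightarrow> psd (nngp_cov relu E X s (Suc m))"
proof (cases m)
  case 0
  assume s: "0 \<le> s"
  show ?thesis unfolding 0 Sig1_eq by (intro psd_scale gram_psd) (use s in simp)
next
  case (Suc k)
  assume s: "0 \<le> s"
  show ?thesis unfolding Suc SigSS_eq by (intro psd_scale gram_psd s)
qed

lemma contract_le: "(norm_adj E *v x) \<bullet> (norm_adj E *v x) \<le> x \<bullet> x"
proof -
  obtain c0 where c0: "0 < c0" "\<And>x. (norm_adj E *v x) \<bullet> (norm_adj E *v x) \<le> x \<bullet> x - c0 * (x \<bullet> (norm_lap E *v x))"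
    using adj_contract[where E=E, OF symE] by blast
  have "0 \<le> c0 * (x \<bullet> (norm_lap E *v x))" using c0(1) qlap_nonneg[OF symE, of x] by simp
  then show ?thesis using c0(2)[of x] by linarith
qed

lemma tr_Sig1:
  fixes X :: "real^'d::finite^'n"
  assumes s: "0 \<le> s"
  shows "tr (nngp_cov relu E X s (Suc 0)) \<le> s / real CARD('d) * frob_sq X"
proof -
  have "tr ((norm_adj E ** X) ** transpose (norm_adj E ** X)) \<le> tr (X ** transpose X)"
    unfolding tr_gram column_mm by (intro sum_mono contract_le)
  then show ?thesis unfolding Sig1_eq tr_scale frob_tr using s by (intro mult_left_mono) auto
qed

lemma dq_psd_nonneg:
  assumes "psd M" shows "0 \<le> dq E M"
proof -
  have "dq E M = dq E (cov_factor M ** transpose (cov_factor M))" using cov_factor_ok[OF assms] by simp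
  also have "\<dots> = (\<Sum>c\<in>UNIV. column c (cov_factor M) \<bullet> (norm_lap E *v column c (cov_factor M)))"
    by (rule dq_gram)
  also have "\<dots> \<ge> 0" by (intro sum_nonneg qlap_nonneg[where E=E, OF symE])
  finally show ?thesis .
qed

lemma step:
  assumes s: "0 \<le> s" and c0: "\<And>x. (norm_adj E *v x) \<bullet> (norm_adj E *v x) \<le> x \<bullet> x - c0 * (x \<bullet> (norm_lap E *v x))"
  shows "tr (nngp_cov relu E X s (Suc (Suc m))) \<le> s * (tr (nngp_cov relu E X s (Suc m)) / 2 - c0 * dq E (gauss_G relu (nngp_cov relu E X s (Suc m))))"
    "dq E (nngp_cov relu E X s (Suc (Suc m))) \<le> s * dq E (gauss_G relu (nngp_cov relu E X s (Suc m)))"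
proof -
  define G where "G = gauss_G relu (nngp_cov relu E X s (Suc m))"
  define K where "K = cov_factor G"
  have GK: "K ** transpose K = G" unfolding K_def G_def by (rule cov_factor_ok[OF gauss_G_psd])
  have trG: "tr G = tr (nngp_cov relu E X s (Suc m)) / 2"
    unfolding G_def by (rule tr_gauss_G[OF Sig_psd[OF s]])
  have eq: "nngp_cov relu E X s (Suc (Suc m)) = s *\<^sub>R ((norm_adj E ** K) ** transpose (norm_adj E ** K))"
    unfolding K_def G_def by (rule SigSS_eq)
  have "tr ((norm_adj E ** K) ** transpose (norm_adj E ** K)) \<le>
     (\<Sum>c\<in>UNIV. column c K \<bullet> column c K - c0 * (column c K \<bullet> (norm_lap E *v column c K)))"
    unfolding tr_gram column_mm by (intro sum_mono c0)
  also have "\<dots> = tr G - c0 * dq E G"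
    unfolding GK[symmetric] tr_gram dq_gram by (simp add: sum_subtractf sum_distrib_left)
  finally have "tr ((norm_adj E ** K) ** transpose (norm_adj E ** K)) \<le> tr G - c0 * dq E G" .
  then show "tr (nngp_cov relu E X s (Suc (Suc m))) \<le> s * (tr (nngp_cov relu E X s (Suc m)) / 2 - c0 * dq E (gauss_G relu (nngp_cov relu E X s (Suc m))))"
    unfolding eq tr_scale trG[symmetric] G_def[symmetric] using s by (intro mult_left_mono)
  have "dq E ((norm_adj E ** K) ** transpose (norm_adj E ** K)) \<le> dq E G"
    unfolding GK[symmetric] dq_gram column_mm by (intro sum_mono qlap_adj_le[where E=E, OF symE])
  then show "dq E (nngp_cov relu E X s (Suc (Suc m))) \<le> s * dq E (gauss_G relu (nngp_cov relu E X s (Suc m)))"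
    unfolding eq dq_scale G_def[symmetric] using s by (intro mult_left_mono)
qed

end


theorem theorem1:
  fixes E :: "'n::finite \<Rightarrow> 'n \<Rightarrow> bool"
    and X :: "real^'d::finite^'n"
    and C :: nat and s :: real
  assumes sym: "\<And>i j. E i j \<longleftrightarrow> E j i"
    and irrefl: "\<And>i. \<not> E i i"
    and X_nz: "X \<noteq> 0"
    and C_pos: "C \<ge> 1"
  shows "(s = 2 \<longrightarrow>
            ((\<lambda>L. GEV relu E X C L s) \<longlonglongrightarrow> 0) \<or> ((\<lambda>L. FSP relu E X C L s) \<longlonglongrightarrow> 0))
       \<and> (0 < s \<and> s < 2 \<longrightarrow>
            (\<forall>L\<ge>1. FSP relu E X C L s \<le> 2 * real C / real CARD('d) * (s / 2) ^ L))"
proof -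
  from adj_contract[where E=E, OF sym] obtain c0 where
    c0: "0 < c0" "\<forall>x. (norm_adj E *v x) \<bullet> (norm_adj E *v x) \<le> x \<bullet> x - c0 * (x \<bullet> (norm_lap E *v x))"
    by blast
  have c0x: "\<And>x. (norm_adj E *v x) \<bullet> (norm_adj E *v x) \<le> x \<bullet> x - c0 * (x \<bullet> (norm_lap E *v x))"
    using c0(2) by blast
  have fpos: "0 < frob_sq X" by (rule frob_pos[OF X_nz])
  have FSPeq: "FSP relu E X C (Suc m) s' = real C * tr (nngp_cov relu E X s' (Suc m)) / frob_sq X"
    if s': "0 \<le> s'" for m s'
    unfolding FSP_def by (rule FSP_formula[OF Sig_psd[where E=E, OF sym s']])
  have dqG: "0 \<le> dq E (gauss_G relu M)" for M
    by (rule dq_psd_nonneg[where E=E, OF sym gauss_G_psd])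
  have part2: "\<forall>L\<ge>1. FSP relu E X C L s \<le> 2 * real C / real CARD('d) * (s / 2) ^ L"
    if s: "0 < s" "s < 2"
  proof (intro allI impI)
    have trb: "tr (nngp_cov relu E X s (Suc m)) \<le> s / real CARD('d) * (s / 2) ^ m * frob_sq X" for m
    proof (induction m)
      case 0
      show ?case using tr_Sig1[where E=E, OF sym, of s X] s by simp
    next
      case (Suc m)
      have "tr (nngp_cov relu E X s (Suc (Suc m))) \<le> s * (tr (nngp_cov relu E X s (Suc m)) / 2 - c0 * dq E (gauss_G relu (nngp_cov relu E X s (Suc m))))"
        by (rule step(1)[where E=E, OF sym _ c0x]) (use s in simp)
      also have "\<dots> \<le> s * (tr (nngp_cov relu E X s (Suc m)) / 2)"
        using s c0(1) dqG[of "nngp_cov relu E X s (Suc m)"] by (intro mult_left_mono) auto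
      also have "\<dots> \<le> s * ((s / real CARD('d) * (s / 2) ^ m * frob_sq X) / 2)"
        using Suc.IH s by (intro mult_left_mono) auto
      also have "\<dots> = s / real CARD('d) * (s / 2) ^ Suc m * frob_sq X" by simp
      finally show ?case .
    qed
    fix L :: nat assume L: "1 \<le> L"
    then obtain m where m: "L = Suc m" by (cases L) auto
    have "FSP relu E X C L s = real C * tr (nngp_cov relu E X s (Suc m)) / frob_sq X"
      unfolding m by (rule FSPeq) (use s in simp)
    also have "\<dots> \<le> real C * (s / real CARD('d) * (s / 2) ^ m * frob_sq X) / frob_sq X"
      using trb[of m] fpos by (intro divide_right_mono mult_left_mono) auto
    also have "\<dots> = 2 * real C / real CARD('d) * (s / 2) ^ L"
      using fpos by (simp add: m field_simps)
    finally show "FSP relu E X C L s \<le> 2 * real C / real CARD('d) * (s / 2) ^ L" .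
  qed
  have part1: "((\<lambda>L. GEV relu E X C L 2) \<longlonglongrightarrow> 0) \<or> ((\<lambda>L. FSP relu E X C L 2) \<longlonglongrightarrow> 0)"
  proof -
    define t where "t m = tr (nngp_cov relu E X 2 (Suc m))" for m
    define g where "g m = dq E (gauss_G relu (nngp_cov relu E X 2 (Suc m)))" for m
    define dd where "dd m = dq E (nngp_cov relu E X 2 (Suc (Suc m)))" for m
    have st1: "t (Suc m) \<le> t m - 2 * c0 * g m" for m
      using step(1)[where E=E, OF sym _ c0x, of 2 X m] by (simp add: t_def g_def algebra_simps)
    have st2: "dd m \<le> 2 * g m" for m
      using step(2)[where E=E, OF sym _ c0x, of 2 X m] by (simp add: dd_def g_def)
    have g0: "0 \<le> g m" for m unfolding g_def by (rule dqG)
    have dd0: "0 \<le> dd m" for m unfolding dd_def by (rule dq_psd_nonneg[where E=E, OF sym Sig_psd[where E=E, OF sym]]) simp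
    have t0: "0 \<le> t m" for m unfolding t_def by (rule psd_tr_nonneg[OF Sig_psd[where E=E, OF sym]]) simp
    have dec: "decseq t" unfolding decseq_Suc_iff using st1 g0 c0(1)
      by (smt (verit) mult_nonneg_nonneg)
    obtain Lim where Lim: "t \<longlonglongrightarrow> Lim" "\<forall>i. Lim \<le> t i"
      using decseq_convergent[OF dec, of 0] t0 by blast
    have ddb: "dd m \<le> (t m - t (Suc m)) / c0" for m
    proof -
      have "c0 * dd m \<le> 2 * c0 * g m" using st2[of m] c0(1) by (simp add: mult_left_mono)
      also have "\<dots> \<le> t m - t (Suc m)" using st1[of m] by simp
      finally show ?thesis using c0(1) by (simp add: field_simps mult.commute)
    qed
    have ddlim: "dd \<longlonglongrightarrow> 0"
    proof (rule tendsto_sandwich[of "\<lambda>_. 0" _ _ "\<lambda>m. (t m - t (Suc m)) / c0"])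
      show "\<forall>\<^sub>F n in sequentially. 0 \<le> dd n" using dd0 by simp
      show "\<forall>\<^sub>F n in sequentially. dd n \<le> (t n - t (Suc n)) / c0" using ddb by simp
      show "(\<lambda>_. 0) \<longlonglongrightarrow> (0::real)" by simp
      have "(\<lambda>m. t m - t (Suc m)) \<longlonglongrightarrow> Lim - Lim"
        by (rule tendsto_diff[OF Lim(1) LIMSEQ_Suc[OF Lim(1)]])
      then have "(\<lambda>m. (t m - t (Suc m)) / c0) \<longlonglongrightarrow> (Lim - Lim) / c0"
        by (rule tendsto_divide[OF _ tendsto_const]) (use c0(1) in simp)
      then show "(\<lambda>m. (t m - t (Suc m)) / c0) \<longlonglongrightarrow> 0" by simp
    qed
    have Lim0: "0 \<le> Lim" using Lim(1) t0 by (intro LIMSEQ_le_const) auto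
    show ?thesis
    proof (cases "Lim = 0")
      case True
      have "(\<lambda>m. FSP relu E X C (Suc m) 2) \<longlonglongrightarrow> real C * 0 / frob_sq X"
      proof -
        have "(\<lambda>m. real C * t m / frob_sq X) \<longlonglongrightarrow> real C * Lim / frob_sq X"
          by (rule tendsto_divide[OF tendsto_mult[OF tendsto_const Lim(1)] tendsto_const]) (use fpos in simp)
        moreover have "FSP relu E X C (Suc m) 2 = real C * t m / frob_sq X" for m
          unfolding t_def by (rule FSPeq) simp
        ultimately show ?thesis using True by simp
      qed
      then have "(\<lambda>m. FSP relu E X C (Suc m) 2) \<longlonglongrightarrow> 0" by simp
      then have "(\<lambda>L. FSP relu E X C L 2) \<longlonglongrightarrow> 0" by (rule filterlim_sequentially_Suc[THEN iffD1])
      then show ?thesis by blast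
    next
      case False
      then have Lp: "0 < Lim" using Lim0 by simp
      define n where "n = real CARD('n)"
      have npos: "0 < n" by (simp add: n_def)
      have Cpos: "0 < real C" using C_pos by simp
      have "(\<lambda>m. GEV relu E X C (Suc (Suc m)) 2) \<longlonglongrightarrow> 0"
      proof (rule LIMSEQ_I)
        fix r :: real assume r: "0 < r"
        define \<delta> where "\<delta> = (r * sqrt Lim / (8 * n))^2"
        have sd: "sqrt \<delta> = r * sqrt Lim / (8 * n)" using r Lp npos by (simp add: \<delta>_def)
        have dpos: "0 < \<delta>" using r Lp npos by (simp add: \<delta>_def)
        have half: "4 * n * sqrt \<delta> / sqrt Lim = r / 2" using sd npos Lp by (simp add: field_simps)
        obtain N where N: "\<And>m. N \<le> m \<Longrightarrow> norm (dd m - 0) < r * \<delta> / (2 * real C)"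
          using LIMSEQ_D[OF ddlim, of "r * \<delta> / (2 * real C)"] r dpos Cpos by auto
        show "\<exists>no. \<forall>m\<ge>no. norm (GEV relu E X C (Suc (Suc m)) 2 - 0) < r"
        proof (intro exI allI impI)
          fix m assume m: "N \<le> m"
          have Tle: "Lim \<le> tr (nngp_cov relu E X 2 (Suc (Suc m)))"
            using spec[OF Lim(2), of "Suc m"] unfolding t_def .
          have b: "GEV relu E X C (Suc (Suc m)) 2 \<le> real C * dd m / \<delta> + 4 * n * sqrt \<delta> / sqrt Lim"
            unfolding GEV_def dd_def n_def
            by (rule GEV_bound[where E=E, OF sym Sig_psd[where E=E, OF sym] Lp Tle dpos C_pos]) simp
          have "dd m < r * \<delta> / (2 * real C)" using N[OF m] dd0[of m] by simp
          then have "real C * dd m < r * \<delta> / 2" using Cpos by (simp add: field_simps)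
          then have "real C * dd m / \<delta> < r / 2" using dpos by (simp add: field_simps)
          moreover have "GEV relu E X C (Suc (Suc m)) 2 \<le> real C * dd m / \<delta> + r / 2"
            using b unfolding half .
          ultimately have lt: "GEV relu E X C (Suc (Suc m)) 2 < r" by linarith
          have "0 \<le> GEV relu E X C (Suc (Suc m)) 2"
            unfolding GEV_def by (rule GEV_nonneg[where E=E, OF sym])
          then show "norm (GEV relu E X C (Suc (Suc m)) 2 - 0) < r" using lt by simp
        qed
      qed
      then have "(\<lambda>m. GEV relu E X C (Suc m) 2) \<longlonglongrightarrow> 0"
        by (rule filterlim_sequentially_Suc[THEN iffD1])
      then have "(\<lambda>L. GEV relu E X C L 2) \<longlonglongrightarrow> 0"
        by (rule filterlim_sequentially_Suc[THEN iffD1])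
      then show ?thesis by simp
    qed
  qed
  show ?thesis using part1 part2 by auto
qed


end
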